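(* Let $\alpha\in[0,1]$ and let $F$ be an ordered graph. Suppose that for every $\varepsilon>0$ and every sufficiently large $d$ (in terms of $\varepsilon$ and $F$), every graph $G$ on $\{0,1\}^d$ satisfying \[ \frac{1}{d}\sum_{\ell=1}^d\frac{e_\ell(G)}{\tau_{\ell,d}}\ge\alpha+\varepsilon \] contains an ordered copy of $F$. Then $\lim_{d\to\infty}\lim_{m\to\infty}\rho_{<}(F,R(m,d))\le\alpha$, where $(R(m,d))$ is any family of graphs as described in the context.
   Context: An ordered graph is a graph whose vertex set carries a total order. An ordered graph $G$ contains an ordered copy of $F$ if there is an injective order-preserving map $V(F)\to V(G)$ sending edges to edges; otherwise $G$ is $F$-free. $\rho_{<}(F,G)=\max\{e(G')/e(G): G'\subseteq G,\ G'\ F\text{-free}\}$. For distinct $x,y\in\{0,1\}^d$, $\delta(x,y)=\min\{i:x_i\ne y_i\}$; $\{0,1\}^d$ is ordered lexicographically ($x<y$ iff $x_{\delta(x,y)}=0$). For a graph $G$ on $\{0,1\}^d$, a level-$\ell$ edge is an edge $uv$ with $\delta(u,v)=\ell$, $e_\ell(G)$ counts them, and $\tau_{\ell,d}=2^{2d-\ell-1}$. The set $\{0,1\}^d\times[m]$ is ordered lexicographically ($(x,i)<(y,j)$ iff $x<y$, or $x=y$ and $i<j$), blocks are $B_x=\{x\}\times[m]$, and an edge between $B_x$ and $B_y$ with $\delta(x,y)=\ell$ is a level-$\ell$ edge. The family $R(m,d)$ (an ordered graph on $\{0,1\}^d\times[m]$) satisfies: for every $d\in\mathbb{N}$ and $\varepsilon>0$,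 for all sufficiently large $m$, (i) for every $\ell\in[d]$, $e_\ell(R(m,d))=(1\pm\varepsilon)2^{d-1}m^2$ and $e(R(m,d))=(1\pm\varepsilon)d2^{d-1}m^2$; (ii) for all distinct $x,y\in\{0,1\}^d$ and $P\subseteq B_x$, $Q\subseteq B_y$ with $|P|,|Q|\ge m^{2/3}$, the number of edges of $R(m,d)$ between $P$ and $Q$ is at most $(1+\varepsilon)2^{-d+\delta(x,y)}|P||Q|$. Here $a=(1\pm\varepsilon)b$ means $(1-\varepsilon)b\le a\le(1+\varepsilon)b$. *)

theory Defs
  imports Complex_Main "HOL-Library.Liminf_Limsup" "HOL-Library.Extended_Real"
begin

(* The cube {0,1}^d: bit-lists of length d; False = 0, True = 1. *)
definition cube :: "nat \<Rightarrow> bool list set" where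
  "cube d = {x. length x = d}"

(* delta(x,y) = min{i : x_i \<noteq> y_i}, 1-based indices *)
definition delta :: "bool list \<Rightarrow> bool list \<Rightarrow> nat" where
  "delta x y = Suc (LEAST i. x ! i \<noteq> y ! i)"

definition lexless :: "bool list \<Rightarrow> bool list \<Rightarrow> bool" where
  "lexless x y \<longleftrightarrow> x \<noteq> y \<and> \<not> (x ! (delta x y - 1))"

definition blockless :: "bool list \<times> nat \<Rightarrow> bool list \<times> nat \<Rightarrow> bool" where
  "blockless u v \<longleftrightarrow> lexless (fst u) (fst v) \<or> (fst u = fst v \<and> snd u < snd v)"

definition is_graph :: "'a set \<Rightarrow> 'a set set \<Rightarrow> bool" where
  "is_graph V E \<longleftrightarrow> E \<subseteq> {e. \<exists>u v. u \<in> V \<and> v \<in> V \<and> u \<noteq> v \<and> e = {u, v}}"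

(* ordered graph F on vertex set {0..<k} (natural order) with edge set EF *)
definition is_ordered_pattern :: "nat \<Rightarrow> nat set set \<Rightarrow> bool" where
  "is_ordered_pattern k EF \<longleftrightarrow> is_graph {0..<k} EF"

definition contains_ordered_copy ::
  "('a \<Rightarrow> 'a \<Rightarrow> bool) \<Rightarrow> 'a set \<Rightarrow> 'a set set \<Rightarrow> nat \<Rightarrow> nat set set \<Rightarrow> bool" where
  "contains_ordered_copy lt V E k EF \<longleftrightarrow>
     (\<exists>f. (\<forall>i<k. f i \<in> V) \<and> (\<forall>i j. i < j \<longrightarrow> j < k \<longrightarrow> lt (f i) (f j)) \<and>
          (\<forall>i j. {i, j} \<in> EF \<longrightarrow> {f i, f j} \<in> E))"

(* rho_<(F,G) = max{ e(G')/e(G) : G' \<subseteq> G F-free }  (0 included as a harmless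
   default: the empty subgraph gives value 0 whenever F has an edge) *)
definition rho ::
  "('a \<Rightarrow> 'a \<Rightarrow> bool) \<Rightarrow> 'a set \<Rightarrow> 'a set set \<Rightarrow> nat \<Rightarrow> nat set set \<Rightarrow> real" where
  "rho lt V E k EF = Max (insert 0
     {real (card E') / real (card E) | E'. E' \<subseteq> E \<and> \<not> contains_ordered_copy lt V E' k EF})"

definition level_edges :: "bool list set set \<Rightarrow> nat \<Rightarrow> nat" where
  "level_edges E l = card {e \<in> E. \<exists>u v. e = {u, v} \<and> u \<noteq> v \<and> delta u v = l}"

definition tau :: "nat \<Rightarrow> nat \<Rightarrow> real" where
  "tau l d = 2 ^ (2 * d - l - 1)"

definition block_level_edges :: "(bool list \<times> nat) set set \<Rightarrow> nat \<Rightarrow> nat" where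
  "block_level_edges E l = card {e \<in> E. \<exists>u v. e = {u, v} \<and> fst u \<noteq> fst v \<and> delta (fst u) (fst v) = l}"

definition block :: "nat \<Rightarrow> bool list \<Rightarrow> (bool list \<times> nat) set" where
  "block m x = {x} \<times> {1..m}"

definition edges_between :: "'a set set \<Rightarrow> 'a set \<Rightarrow> 'a set \<Rightarrow> nat" where
  "edges_between E P Q = card {e \<in> E. \<exists>p\<in>P. \<exists>q\<in>Q. e = {p, q}}"

definition approx_eq :: "real \<Rightarrow> real \<Rightarrow> real \<Rightarrow> bool" where
  "approx_eq eps a b \<longleftrightarrow> (1 - eps) * b \<le> a \<and> a \<le> (1 + eps) * b"

definition R_family :: "(nat \<Rightarrow> nat \<Rightarrow> (bool list \<times> nat) set set) \<Rightarrow> bool" where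
  "R_family R \<longleftrightarrow>
     (\<forall>m d. is_graph (cube d \<times> {1..m}) (R m d)) \<and>
     (\<forall>d. \<forall>eps>0. \<exists>M. \<forall>m\<ge>M.
        (\<forall>l\<in>{1..d}. approx_eq eps (real (block_level_edges (R m d) l)) (2 ^ (d - 1) * real m ^ 2)) \<and>
        approx_eq eps (real (card (R m d))) (real d * 2 ^ (d - 1) * real m ^ 2) \<and>
        (\<forall>x\<in>cube d. \<forall>y\<in>cube d. \<forall>P Q. x \<noteq> y \<longrightarrow> P \<subseteq> block m x \<longrightarrow> Q \<subseteq> block m y \<longrightarrow>
            real (card P) \<ge> real m powr (2/3) \<longrightarrow> real (card Q) \<ge> real m powr (2/3) \<longrightarrow>
            real (edges_between (R m d) P Q)
              \<le> (1 + eps) * 2 powr (real (delta x y) - real d) * real (card P) * real (card Q)))"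

end

theory Submission
  imports Defs "HOL-Analysis.Convex" "HOL-Library.FuncSet"
begin

definition pfun :: "'a set \<Rightarrow> ('a \<Rightarrow> 'a set) \<Rightarrow> bool" where
  "pfun V p \<longleftrightarrow> (\<forall>a\<in>V. a \<in> p a \<and> p a \<subseteq> V \<and> (\<forall>b\<in>p a. p b = p a))"

lemma pfun_memD: "pfun V p \<Longrightarrow> a \<in> V \<Longrightarrow> a \<in> p a"
  and pfun_subD: "pfun V p \<Longrightarrow> a \<in> V \<Longrightarrow> p a \<subseteq> V"
  and pfun_eqD: "pfun V p \<Longrightarrow> a \<in> V \<Longrightarrow> b \<in> p a \<Longrightarrow> p b = p a"
  unfolding pfun_def by blast+

lemma pfun_iff:
  assumes p: "pfun V p" and a: "a \<in> V" and b: "b \<in> V"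
  shows "(b \<in> p a) = (p a = p b)"
proof
  assume "b \<in> p a"
  then show "p a = p b" using pfun_eqD[OF p a] by simp
next
  assume "p a = p b"
  then show "b \<in> p a" using pfun_memD[OF p b] by simp
qed

lemma avg1:
  fixes g :: "'a \<Rightarrow> real"
  assumes p: "pfun V p" and fin: "finite V"
  shows "(\<Sum>b\<in>V. g b) = (\<Sum>b\<in>V. (\<Sum>c\<in>p b. g c) / card (p b))"
proof -
  have fs: "\<And>b. b \<in> V \<Longrightarrow> finite (p b)" using p fin pfun_subD finite_subset by metis
  have "(\<Sum>b\<in>V. (\<Sum>c\<in>p b. g c) / card (p b)) = (\<Sum>b\<in>V. \<Sum>c\<in>V. (if c \<in> p b then g c / card (p b) else 0))"
  proof (rule sum.cong[OF refl])
    fix b assume b: "b \<in> V"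
    have "(\<Sum>c\<in>V. (if c \<in> p b then g c / card (p b) else 0)) = (\<Sum>c\<in>p b. g c / card (p b))"
      using pfun_subD[OF p b] fin by (simp add: sum.If_cases Int_absorb1)
    then show "(\<Sum>c\<in>p b. g c) / card (p b) = (\<Sum>c\<in>V. (if c \<in> p b then g c / card (p b) else 0))"
      by (simp add: sum_divide_distrib)
  qed
  also have "\<dots> = (\<Sum>c\<in>V. \<Sum>b\<in>V. (if c \<in> p b then g c / card (p b) else 0))"
    by (rule sum.swap)
  also have "\<dots> = (\<Sum>c\<in>V. g c)"
  proof (rule sum.cong[OF refl])
    fix c assume c: "c \<in> V"
    have "(\<Sum>b\<in>V. (if c \<in> p b then g c / card (p b) else 0)) = (\<Sum>b\<in>V. (if b \<in> p c then g c / card (p c) else 0))"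
    proof (rule sum.cong[OF refl])
      fix b assume b: "b \<in> V"
      show "(if c \<in> p b then g c / card (p b) else 0) = (if b \<in> p c then g c / card (p c) else 0)"
        using pfun_iff[OF p b c] pfun_iff[OF p c b] by auto
    qed
    also have "\<dots> = (\<Sum>b\<in>p c. g c / card (p c))"
      using pfun_subD[OF p c] fin by (simp add: sum.If_cases Int_absorb1)
    also have "\<dots> = g c"
    proof -
      have "card (p c) > 0" using fs[OF c] pfun_memD[OF p c] card_gt_0_iff by blast
      then show ?thesis by simp
    qed
    finally show "(\<Sum>b\<in>V. (if c \<in> p b then g c / card (p b) else 0)) = g c" .
  qed
  finally show ?thesis by simp
qed

lemma avg2:
  fixes g :: "'a \<Rightarrow> 'a \<Rightarrow> real"
  assumes p: "pfun V p" and fin: "finite V"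
  shows "(\<Sum>a\<in>V. \<Sum>b\<in>V. g a b) =
    (\<Sum>a\<in>V. \<Sum>b\<in>V. (\<Sum>a'\<in>p a. \<Sum>b'\<in>p b. g a' b') / (card (p a) * card (p b)))"
proof -
  have "(\<Sum>a\<in>V. \<Sum>b\<in>V. g a b) = (\<Sum>a\<in>V. \<Sum>b\<in>V. (\<Sum>b'\<in>p b. g a b') / card (p b))"
    by (rule sum.cong[OF refl], rule avg1[OF p fin])
  also have "\<dots> = (\<Sum>b\<in>V. \<Sum>a\<in>V. (\<Sum>b'\<in>p b. g a b') / card (p b))" by (rule sum.swap)
  also have "\<dots> = (\<Sum>b\<in>V. \<Sum>a\<in>V. (\<Sum>a'\<in>p a. (\<Sum>b'\<in>p b. g a' b') / card (p b)) / card (p a))"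
    by (rule sum.cong[OF refl], rule avg1[OF p fin])
  also have "\<dots> = (\<Sum>a\<in>V. \<Sum>b\<in>V. (\<Sum>a'\<in>p a. (\<Sum>b'\<in>p b. g a' b') / card (p b)) / card (p a))"
    by (rule sum.swap)
  also have "\<dots> = (\<Sum>a\<in>V. \<Sum>b\<in>V. (\<Sum>a'\<in>p a. \<Sum>b'\<in>p b. g a' b') / (card (p a) * card (p b)))"
  proof (intro sum.cong refl)
    fix a b
    show "(\<Sum>a'\<in>p a. (\<Sum>b'\<in>p b. g a' b') / card (p b)) / card (p a) =
      (\<Sum>a'\<in>p a. \<Sum>b'\<in>p b. g a' b') / (card (p a) * card (p b))"
      by (simp add: sum_divide_distrib[symmetric] divide_divide_eq_left)
  qed
  finally show ?thesis .
qed


definition eS :: "('a \<Rightarrow> 'a \<Rightarrow> real) \<Rightarrow> 'a set \<Rightarrow> 'a set \<Rightarrow> real" where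
  "eS A X Y = (\<Sum>a\<in>X. \<Sum>b\<in>Y. A a b)"

definition dens :: "('a \<Rightarrow> 'a \<Rightarrow> real) \<Rightarrow> 'a set \<Rightarrow> 'a set \<Rightarrow> real" where
  "dens A X Y = eS A X Y / (card X * card Y)"

definition UU :: "('a \<Rightarrow> 'a \<Rightarrow> real) \<Rightarrow> ('a \<Rightarrow> 'a set) \<Rightarrow> 'a \<Rightarrow> 'a \<Rightarrow> real" where
  "UU A p a b = dens A (p a) (p b)"

definition regp :: "('a \<Rightarrow> 'a \<Rightarrow> real) \<Rightarrow> real \<Rightarrow> 'a set \<Rightarrow> 'a set \<Rightarrow> bool" where
  "regp A e X Y \<longleftrightarrow> (\<forall>S\<subseteq>X. \<forall>T\<subseteq>Y. \<bar>eS A S T - dens A X Y * card S * card T\<bar> \<le> e * card X * card Y)"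

definition irrw :: "('a \<Rightarrow> 'a \<Rightarrow> real) \<Rightarrow> real \<Rightarrow> 'a set \<Rightarrow> ('a \<Rightarrow> 'a set) \<Rightarrow> real" where
  "irrw A e V p = (\<Sum>a\<in>V. \<Sum>b\<in>V. (if regp A e (p a) (p b) then 0 else 1))"

definition energy :: "('a \<Rightarrow> 'a \<Rightarrow> real) \<Rightarrow> 'a set \<Rightarrow> ('a \<Rightarrow> 'a set) \<Rightarrow> real" where
  "energy A V p = (\<Sum>a\<in>V. \<Sum>b\<in>V. (UU A p a b)\<^sup>2)"

definition meas :: "'a set \<Rightarrow> ('a \<Rightarrow> 'a set) \<Rightarrow> ('a \<Rightarrow> 'a \<Rightarrow> real) \<Rightarrow> bool" where
  "meas V p h \<longleftrightarrow> (\<forall>a\<in>V. \<forall>a'\<in>V. \<forall>b\<in>V. \<forall>b'\<in>V. p a = p a' \<longrightarrow> p b = p b' \<longrightarrow> h a b = h a' b')"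

definition refine :: "('a \<Rightarrow> 'a set) \<Rightarrow> 'a set set \<Rightarrow> 'a \<Rightarrow> 'a set" where
  "refine p W a = {b \<in> p a. \<forall>w\<in>W. b \<in> w \<longleftrightarrow> a \<in> w}"

lemma fact1:
  assumes p: "pfun V p" and fin: "finite V" and h: "meas V p h"
  shows "(\<Sum>a\<in>V. \<Sum>b\<in>V. A a b * h a b) = (\<Sum>a\<in>V. \<Sum>b\<in>V. UU A p a b * h a b)"
proof -
  have "(\<Sum>a\<in>V. \<Sum>b\<in>V. A a b * h a b) =
    (\<Sum>a\<in>V. \<Sum>b\<in>V. (\<Sum>a'\<in>p a. \<Sum>b'\<in>p b. A a' b' * h a' b') / (card (p a) * card (p b)))"
    by (rule avg2[OF p fin])
  also have "\<dots> = (\<Sum>a\<in>V. \<Sum>b\<in>V. UU A p a b * h a b)"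
  proof (intro sum.cong refl)
    fix a b assume a: "a \<in> V" and b: "b \<in> V"
    have "(\<Sum>a'\<in>p a. \<Sum>b'\<in>p b. A a' b' * h a' b') = (\<Sum>a'\<in>p a. \<Sum>b'\<in>p b. A a' b' * h a b)"
    proof (intro sum.cong refl)
      fix a' b' assume a': "a' \<in> p a" and b': "b' \<in> p b"
      have a'V: "a' \<in> V" using pfun_subD[OF p a] a' by blast
      have b'V: "b' \<in> V" using pfun_subD[OF p b] b' by blast
      have "h a b = h a' b'"
        using h a b a'V b'V pfun_eqD[OF p a a'] pfun_eqD[OF p b b']
        unfolding meas_def by (metis (no_types))
      then show "A a' b' * h a' b' = A a' b' * h a b" by simp
    qed
    also have "\<dots> = eS A (p a) (p b) * h a b"
      unfolding eS_def by (simp add: sum_distrib_right)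
    finally show "(\<Sum>a'\<in>p a. \<Sum>b'\<in>p b. A a' b' * h a' b') / (card (p a) * card (p b)) = UU A p a b * h a b"
      unfolding UU_def dens_def by simp
  qed
  finally show ?thesis .
qed

lemma refine_sub: "refine p W a \<subseteq> p a"
  unfolding refine_def by blast

lemma pfun_refine:
  assumes p: "pfun V p" shows "pfun V (refine p W)"
  unfolding pfun_def
proof (intro ballI conjI)
  fix a assume a: "a \<in> V"
  show "a \<in> refine p W a" using pfun_memD[OF p a] unfolding refine_def by simp
  show "refine p W a \<subseteq> V" using pfun_subD[OF p a] refine_sub[of p W a] by (rule order_trans[rotated])
  fix b assume b: "b \<in> refine p W a"
  then have b1: "b \<in> p a" and b2: "\<forall>w\<in>W. b \<in> w \<longleftrightarrow> a \<in> w" unfolding refine_def by simp_all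
  have "p b = p a" using pfun_eqD[OF p a b1] .
  then show "refine p W b = refine p W a" using b2 unfolding refine_def by auto
qed

lemma refine_eq_p:
  assumes p: "pfun V p" and a: "a \<in> V" and a': "a' \<in> V" and e: "refine p W a = refine p W a'"
  shows "p a = p a'"
proof -
  have "a' \<in> refine p W a" using e pfun_memD[OF pfun_refine[OF p] a'] by simp
  then have "a' \<in> p a" using refine_sub[of p W a] by (rule rev_subsetD)
  from pfun_eqD[OF p a this] show ?thesis by simp
qed

lemma refine_eq_w:
  assumes p: "pfun V p" and a: "a \<in> V" and a': "a' \<in> V" and e: "refine p W a = refine p W a'"
    and w: "w \<in> W"
  shows "(a \<in> w) = (a' \<in> w)"
proof -
  have "a' \<in> refine p W a" using e pfun_memD[OF pfun_refine[OF p] a'] by simp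
  then show ?thesis using w unfolding refine_def by simp
qed

lemma meas_U: "meas V p (UU A p)"
  unfolding meas_def UU_def by simp

lemma meas_coarse:
  assumes p: "pfun V p" and h: "meas V p h" shows "meas V (refine p W) h"
  unfolding meas_def
proof (intro ballI impI)
  fix a a' b b' assume a: "a \<in> V" and a': "a' \<in> V" and b: "b \<in> V" and b': "b' \<in> V"
    and e1: "refine p W a = refine p W a'" and e2: "refine p W b = refine p W b'"
  have "p a = p a'" by (rule refine_eq_p[OF p a a' e1])
  moreover have "p b = p b'" by (rule refine_eq_p[OF p b b' e2])
  ultimately show "h a b = h a' b'" using h a a' b b' unfolding meas_def by blast
qed

lemma meas_rect:
  assumes p: "pfun V p" and S: "S \<in> W" and T: "T \<in> W"
  shows "meas V (refine p W) (\<lambda>a b. of_bool (a \<in> S) * of_bool (b \<in> T))"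
  unfolding meas_def
proof (intro ballI impI)
  fix a a' b b' assume a: "a \<in> V" and a': "a' \<in> V" and b: "b \<in> V" and b': "b' \<in> V"
    and e1: "refine p W a = refine p W a'" and e2: "refine p W b = refine p W b'"
  have "(a \<in> S) = (a' \<in> S)" by (rule refine_eq_w[OF p a a' e1 S])
  moreover have "(b \<in> T) = (b' \<in> T)" by (rule refine_eq_w[OF p b b' e2 T])
  ultimately show "of_bool (a \<in> S) * of_bool (b \<in> T) = (of_bool (a' \<in> S) * of_bool (b' \<in> T) :: real)"
    by simp
qed

lemma card_refine:
  assumes fin: "finite V" and W: "finite W"
  shows "card (refine p W ` V) \<le> card (p ` V) * 2 ^ card W"
proof -
  define F where "F = (\<lambda>(Q, X). {b \<in> Q. \<forall>w\<in>W. b \<in> w \<longleftrightarrow> w \<in> X})"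
  have "refine p W ` V \<subseteq> F ` (p ` V \<times> Pow W)"
  proof
    fix Z assume "Z \<in> refine p W ` V"
    then obtain a where a: "a \<in> V" and Z: "Z = refine p W a" by blast
    have "Z = F (p a, {w \<in> W. a \<in> w})" unfolding Z F_def refine_def by auto
    then show "Z \<in> F ` (p ` V \<times> Pow W)" using a by blast
  qed
  then have "card (refine p W ` V) \<le> card (F ` (p ` V \<times> Pow W))"
    by (intro card_mono) (use fin W in auto)
  also have "\<dots> \<le> card (p ` V \<times> Pow W)" by (rule card_image_le) (use fin W in auto)
  also have "\<dots> = card (p ` V) * 2 ^ card W" by (simp add: card_cartesian_product card_Pow W)
  finally show ?thesis .
qed


lemma sum_ind:
  fixes g :: "'a \<Rightarrow> real"
  assumes "finite V" "T \<subseteq> V"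
  shows "(\<Sum>b\<in>V. of_bool (b \<in> T) * g b) = sum g T"
proof -
  have "(\<Sum>b\<in>V. of_bool (b \<in> T) * g b) = (\<Sum>b\<in>V. if b \<in> T then g b else 0)"
    by (intro sum.cong) auto
  also have "\<dots> = sum g (V \<inter> T)" using assms(1) by (simp add: sum.inter_restrict)
  also have "V \<inter> T = T" using assms(2) by (rule Int_absorb1)
  finally show ?thesis .
qed

lemma rect_sum:
  fixes g :: "'a \<Rightarrow> 'a \<Rightarrow> real"
  assumes fin: "finite V" and S: "S \<subseteq> V" and T: "T \<subseteq> V"
  shows "(\<Sum>a\<in>V. \<Sum>b\<in>V. g a b * (of_bool (a \<in> S) * of_bool (b \<in> T))) = (\<Sum>a\<in>S. \<Sum>b\<in>T. g a b)"
proof -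
  have "(\<Sum>a\<in>V. \<Sum>b\<in>V. g a b * (of_bool (a \<in> S) * of_bool (b \<in> T)))
      = (\<Sum>a\<in>V. of_bool (a \<in> S) * (\<Sum>b\<in>V. of_bool (b \<in> T) * g a b))"
    by (simp add: sum_distrib_left mult_ac)
  also have "\<dots> = (\<Sum>a\<in>V. of_bool (a \<in> S) * (\<Sum>b\<in>T. g a b))"
  proof -
    have "\<And>a. (\<Sum>b\<in>V. of_bool (b \<in> T) * g a b) = (\<Sum>b\<in>T. g a b)"
      using fin T by (rule sum_ind)
    then show ?thesis by simp
  qed
  also have "\<dots> = (\<Sum>a\<in>S. \<Sum>b\<in>T. g a b)"
    using fin S by (rule sum_ind)
  finally show ?thesis .
qed

lemma sumsq_expand:
  fixes x y :: "'a \<Rightarrow> 'a \<Rightarrow> real"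
  shows "(\<Sum>a\<in>V. \<Sum>b\<in>V. (x a b - y a b)\<^sup>2) =
    (\<Sum>a\<in>V. \<Sum>b\<in>V. (x a b)\<^sup>2) - 2 * (\<Sum>a\<in>V. \<Sum>b\<in>V. x a b * y a b) + (\<Sum>a\<in>V. \<Sum>b\<in>V. (y a b)\<^sup>2)"
proof -
  have "\<And>a b. (x a b - y a b)\<^sup>2 = (x a b)\<^sup>2 - 2 * (x a b * y a b) + (y a b)\<^sup>2"
    by (simp add: power2_diff)
  then show ?thesis
    by (simp add: sum.distrib sum_subtractf sum_distrib_left)
qed

lemma energy_diff:
  assumes p: "pfun V p" and fin: "finite V"
  shows "(\<Sum>a\<in>V. \<Sum>b\<in>V. (UU A (refine p W) a b - UU A p a b)\<^sup>2) = energy A V (refine p W) - energy A V p"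
proof -
  have h1: "(\<Sum>a\<in>V. \<Sum>b\<in>V. A a b * UU A p a b) = (\<Sum>a\<in>V. \<Sum>b\<in>V. UU A (refine p W) a b * UU A p a b)"
    by (rule fact1[OF pfun_refine[OF p] fin meas_coarse[OF p meas_U]])
  have h2: "(\<Sum>a\<in>V. \<Sum>b\<in>V. A a b * UU A p a b) = (\<Sum>a\<in>V. \<Sum>b\<in>V. UU A p a b * UU A p a b)"
    by (rule fact1[OF p fin meas_U])
  show ?thesis
    unfolding sumsq_expand energy_def using h1 h2 by (simp add: power2_eq_square)
qed

lemma local_inc:
  fixes e :: real
  assumes p: "pfun V p" and fin: "finite V" and a0: "a0 \<in> V" and b0: "b0 \<in> V"
    and S: "S \<subseteq> p a0" and T: "T \<subseteq> p b0" and SW: "S \<in> W" and TW: "T \<in> W"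
    and big: "\<bar>eS A S T - dens A (p a0) (p b0) * card S * card T\<bar> > e * card (p a0) * card (p b0)"
    and e: "e \<ge> 0"
  shows "(\<Sum>a\<in>p a0. \<Sum>b\<in>p b0. (UU A (refine p W) a b - UU A p a b)\<^sup>2) \<ge> e\<^sup>2 * card (p a0) * card (p b0)"
proof -
  define f where "f a b = UU A (refine p W) a b - UU A p a b" for a b
  define h where "h a b = (of_bool (a \<in> S) * of_bool (b \<in> T) :: real)" for a b
  have SV: "S \<subseteq> V" using S pfun_subD[OF p a0] by (rule order_trans)
  have TV: "T \<subseteq> V" using T pfun_subD[OF p b0] by (rule order_trans)
  have finA: "finite (p a0)" using pfun_subD[OF p a0] fin by (rule finite_subset)
  have finB: "finite (p b0)" using pfun_subD[OF p b0] fin by (rule finite_subset)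
  have finS: "finite S" using S finA by (rule finite_subset)
  have finT: "finite T" using T finB by (rule finite_subset)
  have i: "(\<Sum>a\<in>V. \<Sum>b\<in>V. A a b * h a b) = eS A S T"
    unfolding h_def eS_def by (rule rect_sum[OF fin SV TV])
  have ii: "(\<Sum>a\<in>V. \<Sum>b\<in>V. UU A p a b * h a b) = dens A (p a0) (p b0) * card S * card T"
  proof -
    have "(\<Sum>a\<in>V. \<Sum>b\<in>V. UU A p a b * h a b) = (\<Sum>a\<in>S. \<Sum>b\<in>T. UU A p a b)"
      unfolding h_def by (rule rect_sum[OF fin SV TV])
    also have "\<dots> = (\<Sum>a\<in>S. \<Sum>b\<in>T. dens A (p a0) (p b0))"
    proof (intro sum.cong refl)
      fix a b assume a: "a \<in> S" and b: "b \<in> T"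
      have "p a = p a0" using pfun_eqD[OF p a0 subsetD[OF S a]] .
      moreover have "p b = p b0" using pfun_eqD[OF p b0 subsetD[OF T b]] .
      ultimately show "UU A p a b = dens A (p a0) (p b0)" unfolding UU_def by simp
    qed
    also have "\<dots> = dens A (p a0) (p b0) * card S * card T" by simp
    finally show ?thesis .
  qed
  have iii: "(\<Sum>a\<in>V. \<Sum>b\<in>V. A a b * h a b) = (\<Sum>a\<in>V. \<Sum>b\<in>V. UU A (refine p W) a b * h a b)"
    unfolding h_def by (rule fact1[OF pfun_refine[OF p] fin meas_rect[OF p SW TW]])
  have iv: "eS A S T - dens A (p a0) (p b0) * card S * card T = (\<Sum>a\<in>S. \<Sum>b\<in>T. f a b)"
  proof -
    have "eS A S T - dens A (p a0) (p b0) * card S * card T =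
      (\<Sum>a\<in>V. \<Sum>b\<in>V. UU A (refine p W) a b * h a b) - (\<Sum>a\<in>V. \<Sum>b\<in>V. UU A p a b * h a b)"
      using i ii iii by simp
    also have "\<dots> = (\<Sum>a\<in>V. \<Sum>b\<in>V. f a b * h a b)"
      unfolding f_def by (simp add: sum_subtractf left_diff_distrib)
    also have "\<dots> = (\<Sum>a\<in>S. \<Sum>b\<in>T. f a b)"
      unfolding h_def by (rule rect_sum[OF fin SV TV])
    finally show ?thesis .
  qed
  have v: "(\<Sum>a\<in>S. \<Sum>b\<in>T. f a b)\<^sup>2 \<le> (\<Sum>a\<in>S. \<Sum>b\<in>T. (f a b)\<^sup>2) * (card S * card T)"
  proof -
    have "(\<Sum>a\<in>S. \<Sum>b\<in>T. f a b) = (\<Sum>x\<in>S \<times> T. f (fst x) (snd x))"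
      by (simp add: sum.cartesian_product case_prod_beta)
    moreover have "(\<Sum>a\<in>S. \<Sum>b\<in>T. (f a b)\<^sup>2) = (\<Sum>x\<in>S \<times> T. (f (fst x) (snd x))\<^sup>2)"
      by (simp add: sum.cartesian_product case_prod_beta)
    moreover have "card (S \<times> T) = card S * card T" by (simp add: card_cartesian_product)
    ultimately show ?thesis
      using sum_squared_le_sum_of_squares[of "\<lambda>x. f (fst x) (snd x)" "S \<times> T"] by simp
  qed
  have vi: "(\<Sum>a\<in>S. \<Sum>b\<in>T. (f a b)\<^sup>2) \<le> (\<Sum>a\<in>p a0. \<Sum>b\<in>p b0. (f a b)\<^sup>2)"
  proof -
    have "(\<Sum>a\<in>S. \<Sum>b\<in>T. (f a b)\<^sup>2) \<le> (\<Sum>a\<in>S. \<Sum>b\<in>p b0. (f a b)\<^sup>2)"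
      by (intro sum_mono sum_mono2[OF finB T]) auto
    also have "\<dots> \<le> (\<Sum>a\<in>p a0. \<Sum>b\<in>p b0. (f a b)\<^sup>2)"
      by (intro sum_mono2[OF finA S] sum_nonneg) auto
    finally show ?thesis .
  qed
  have cS: "real (card S) \<le> card (p a0)" using card_mono[OF finA S] by simp
  have cT: "real (card T) \<le> card (p b0)" using card_mono[OF finB T] by simp
  define c where "c = real (card (p a0)) * card (p b0)"
  have ca: "card (p a0) > 0" using pfun_memD[OF p a0] finA by (auto simp: card_gt_0_iff)
  have cb: "card (p b0) > 0" using pfun_memD[OF p b0] finB by (auto simp: card_gt_0_iff)
  have cpos: "c > 0" unfolding c_def using ca cb by simp
  define X where "X = (\<Sum>a\<in>S. \<Sum>b\<in>T. f a b)"
  define Y where "Y = (\<Sum>a\<in>p a0. \<Sum>b\<in>p b0. (f a b)\<^sup>2)"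
  have Y0: "Y \<ge> 0" unfolding Y_def by (intro sum_nonneg) auto
  have "real (card S * card T) \<le> c" unfolding c_def using cS cT
    by (simp add: mult_mono)
  moreover have Z0: "(\<Sum>a\<in>S. \<Sum>b\<in>T. (f a b)\<^sup>2) \<ge> 0" by (intro sum_nonneg) auto
  ultimately have "(\<Sum>a\<in>S. \<Sum>b\<in>T. (f a b)\<^sup>2) * real (card S * card T) \<le> Y * c"
    using vi Y0 unfolding Y_def by (intro mult_mono) auto
  then have X2: "X\<^sup>2 \<le> Y * c" using v unfolding X_def by simp
  have "e * c < \<bar>X\<bar>" using big iv unfolding X_def c_def by (simp add: mult.assoc)
  moreover have "0 \<le> e * c" using e cpos by simp
  ultimately have "(e * c)\<^sup>2 < \<bar>X\<bar>\<^sup>2" by (intro power_strict_mono) auto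
  then have "(e * c)\<^sup>2 < X\<^sup>2" by simp
  then have "e\<^sup>2 * c * c < Y * c" using X2 by (simp add: power2_eq_square mult_ac)
  then have "e\<^sup>2 * c < Y" using cpos by simp
  then show ?thesis unfolding Y_def c_def f_def by (simp add: mult.assoc)
qed


lemma increment:
  fixes e :: real
  assumes p: "pfun V p" and fin: "finite V" and e: "e \<ge> 0"
    and wit: "\<And>a b. a \<in> V \<Longrightarrow> b \<in> V \<Longrightarrow> \<not> regp A e (p a) (p b) \<Longrightarrow>
      \<exists>S\<in>W. \<exists>T\<in>W. S \<subseteq> p a \<and> T \<subseteq> p b \<and>
        \<bar>eS A S T - dens A (p a) (p b) * card S * card T\<bar> > e * card (p a) * card (p b)"
  shows "energy A V (refine p W) \<ge> energy A V p + e\<^sup>2 * irrw A e V p"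
proof -
  define f where "f a b = (UU A (refine p W) a b - UU A p a b)\<^sup>2" for a b
  define ir where "ir a b = (if regp A e (p a) (p b) then 0 else 1 :: real)" for a b
  have "e\<^sup>2 * irrw A e V p = (\<Sum>a\<in>V. \<Sum>b\<in>V. ir a b * e\<^sup>2)"
    unfolding irrw_def ir_def by (simp add: sum_distrib_left mult.commute)
  also have "\<dots> \<le> (\<Sum>a\<in>V. \<Sum>b\<in>V. ir a b * ((\<Sum>a'\<in>p a. \<Sum>b'\<in>p b. f a' b') / (card (p a) * card (p b))))"
  proof (intro sum_mono)
    fix a b assume a: "a \<in> V" and b: "b \<in> V"
    show "ir a b * e\<^sup>2 \<le> ir a b * ((\<Sum>a'\<in>p a. \<Sum>b'\<in>p b. f a' b') / (card (p a) * card (p b)))"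
    proof (cases "regp A e (p a) (p b)")
      case True then show ?thesis unfolding ir_def by simp
    next
      case False
      then obtain S T where S: "S \<in> W" "S \<subseteq> p a" and T: "T \<in> W" "T \<subseteq> p b"
        and big: "\<bar>eS A S T - dens A (p a) (p b) * card S * card T\<bar> > e * card (p a) * card (p b)"
        using wit[OF a b] by blast
      have li: "(\<Sum>a'\<in>p a. \<Sum>b'\<in>p b. f a' b') \<ge> e\<^sup>2 * card (p a) * card (p b)"
        unfolding f_def by (rule local_inc[OF p fin a b S(2) T(2) S(1) T(1) big e])
      have finA: "finite (p a)" using pfun_subD[OF p a] fin by (rule finite_subset)
      have finB: "finite (p b)" using pfun_subD[OF p b] fin by (rule finite_subset)
      have ca: "card (p a) > 0" using pfun_memD[OF p a] finA by (auto simp: card_gt_0_iff)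
      have cb: "card (p b) > 0" using pfun_memD[OF p b] finB by (auto simp: card_gt_0_iff)
      have "e\<^sup>2 \<le> (\<Sum>a'\<in>p a. \<Sum>b'\<in>p b. f a' b') / (card (p a) * card (p b))"
        using li ca cb by (simp add: pos_le_divide_eq mult.assoc)
      then show ?thesis using False unfolding ir_def by simp
    qed
  qed
  also have "\<dots> = (\<Sum>a\<in>V. \<Sum>b\<in>V. (\<Sum>a'\<in>p a. \<Sum>b'\<in>p b. ir a' b' * f a' b') / (card (p a) * card (p b)))"
  proof (intro sum.cong refl)
    fix a b assume a: "a \<in> V" and b: "b \<in> V"
    have "(\<Sum>a'\<in>p a. \<Sum>b'\<in>p b. ir a' b' * f a' b') = (\<Sum>a'\<in>p a. \<Sum>b'\<in>p b. ir a b * f a' b')"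
    proof (intro sum.cong refl)
      fix a' b' assume a': "a' \<in> p a" and b': "b' \<in> p b"
      have "p a' = p a" by (rule pfun_eqD[OF p a a'])
      moreover have "p b' = p b" by (rule pfun_eqD[OF p b b'])
      ultimately show "ir a' b' * f a' b' = ir a b * f a' b'" unfolding ir_def by simp
    qed
    then show "ir a b * ((\<Sum>a'\<in>p a. \<Sum>b'\<in>p b. f a' b') / (card (p a) * card (p b))) =
      (\<Sum>a'\<in>p a. \<Sum>b'\<in>p b. ir a' b' * f a' b') / (card (p a) * card (p b))"
      by (simp add: sum_distrib_left)
  qed
  also have "\<dots> = (\<Sum>a\<in>V. \<Sum>b\<in>V. ir a b * f a b)"
    by (rule avg2[OF p fin, symmetric])
  also have "\<dots> \<le> (\<Sum>a\<in>V. \<Sum>b\<in>V. f a b)"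
    unfolding ir_def f_def by (intro sum_mono) auto
  also have "\<dots> = energy A V (refine p W) - energy A V p"
    unfolding f_def by (rule energy_diff[OF p fin])
  finally show ?thesis by simp
qed

lemma dens_bounds:
  assumes A: "\<And>a b. 0 \<le> A a b \<and> A a b \<le> 1" and fX: "finite X" and fY: "finite Y"
  shows "0 \<le> dens A X Y" and "dens A X Y \<le> 1"
proof -
  have e0: "0 \<le> eS A X Y" unfolding eS_def using A by (intro sum_nonneg) auto
  have "eS A X Y \<le> (\<Sum>a\<in>X. \<Sum>b\<in>Y. 1)" unfolding eS_def using A by (intro sum_mono) auto
  then have e1: "eS A X Y \<le> real (card X) * card Y" by simp
  show "0 \<le> dens A X Y" unfolding dens_def using e0 by simp
  show "dens A X Y \<le> 1"
  proof (cases "card X * card Y = 0")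
    case True then show ?thesis unfolding dens_def by auto
  next
    case False then have "real (card X) * card Y > 0" by simp
    then show ?thesis unfolding dens_def using e1 by simp
  qed
qed

lemma energy_le:
  assumes A: "\<And>a b. 0 \<le> A a b \<and> A a b \<le> 1" and p: "pfun V p" and fin: "finite V"
  shows "energy A V p \<le> real (card V) ^ 2"
proof -
  have "energy A V p \<le> (\<Sum>a\<in>V. \<Sum>b\<in>V. 1)"
    unfolding energy_def
  proof (intro sum_mono)
    fix a b assume a: "a \<in> V" and b: "b \<in> V"
    have finA: "finite (p a)" using pfun_subD[OF p a] fin by (rule finite_subset)
    have finB: "finite (p b)" using pfun_subD[OF p b] fin by (rule finite_subset)
    have "0 \<le> UU A p a b" "UU A p a b \<le> 1" unfolding UU_def using dens_bounds[OF A finA finB] by auto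
    then show "(UU A p a b)\<^sup>2 \<le> 1" by (simp add: power_le_one)
  qed
  then show ?thesis by (simp add: power2_eq_square)
qed

fun tb :: "nat \<Rightarrow> nat \<Rightarrow> nat" where
  "tb t0 0 = t0"
| "tb t0 (Suc n) = tb t0 n * 2 ^ (2 * (tb t0 n)\<^sup>2)"

lemma tb_mono: "tb t0 n \<le> tb t0 (Suc n)"
  by simp

lemma iter:
  fixes e :: real
  assumes fin: "finite V" and p0: "pfun V p0" and t0: "card (p0 ` V) \<le> t0" and e: "e > 0"
  shows "\<exists>p. pfun V p \<and> (\<forall>a\<in>V. p a \<subseteq> p0 a) \<and> card (p ` V) \<le> tb t0 n \<and>
    (irrw A e V p \<le> e * (card V)\<^sup>2 \<or> energy A V p \<ge> n * e ^ 3 * (card V)\<^sup>2)"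
proof (induction n)
  case 0
  have "energy A V p0 \<ge> 0" unfolding energy_def by (intro sum_nonneg) auto
  then show ?case using p0 t0 by auto
next
  case (Suc n)
  then obtain p where p: "pfun V p" and sub: "\<forall>a\<in>V. p a \<subseteq> p0 a" and cp: "card (p ` V) \<le> tb t0 n"
    and alt: "irrw A e V p \<le> e * (card V)\<^sup>2 \<or> energy A V p \<ge> n * e ^ 3 * (card V)\<^sup>2" by blast
  show ?case
  proof (cases "irrw A e V p \<le> e * (card V)\<^sup>2")
    case True
    have "tb t0 n * 1 \<le> tb t0 n * 2 ^ (2 * (tb t0 n)\<^sup>2)" by (intro mult_le_mono2) simp
    then have "card (p ` V) \<le> tb t0 n * 2 ^ (2 * (tb t0 n)\<^sup>2)" using cp by linarith
    then have "card (p ` V) \<le> tb t0 (Suc n)" by simp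
    then show ?thesis using p sub True by (intro exI[of _ p]) auto
  next
    case False
    then have en: "energy A V p \<ge> n * e ^ 3 * (card V)\<^sup>2" using alt by simp
    define P where "P = p ` V"
    define P2 where "P2 = {XY \<in> P \<times> P. \<not> regp A e (fst XY) (snd XY)}"
    define Pw where "Pw XY ST \<longleftrightarrow> fst ST \<subseteq> fst XY \<and> snd ST \<subseteq> snd XY \<and>
        \<bar>eS A (fst ST) (snd ST) - dens A (fst XY) (snd XY) * card (fst ST) * card (snd ST)\<bar>
          > e * card (fst XY) * card (snd XY)" for XY ST
    define wit where "wit XY = (SOME ST. Pw XY ST)" for XY
    define W where "W = (fst \<circ> wit) ` P2 \<union> (snd \<circ> wit) ` P2"
    have finP: "finite P" unfolding P_def using fin by simp
    have finP2: "finite P2" unfolding P2_def using finP by simp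
    have finW: "finite W" unfolding W_def using finP2 by simp
    have cP2: "card P2 \<le> card P * card P"
    proof -
      have "card P2 \<le> card (P \<times> P)" unfolding P2_def using finP by (intro card_mono) auto
      then show ?thesis by (simp add: card_cartesian_product)
    qed
    have cW: "card W \<le> 2 * (card P)\<^sup>2"
    proof -
      have "card W \<le> card ((fst \<circ> wit) ` P2) + card ((snd \<circ> wit) ` P2)"
        unfolding W_def by (rule card_Un_le)
      also have "\<dots> \<le> card P2 + card P2" by (intro add_mono card_image_le finP2)
      finally show ?thesis using cP2 by (simp add: power2_eq_square)
    qed
    have witp: "\<exists>S\<in>W. \<exists>T\<in>W. S \<subseteq> p a \<and> T \<subseteq> p b \<and>
        \<bar>eS A S T - dens A (p a) (p b) * card S * card T\<bar> > e * card (p a) * card (p b)"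
      if a: "a \<in> V" and b: "b \<in> V" and nr: "\<not> regp A e (p a) (p b)" for a b
    proof -
      have inP2: "(p a, p b) \<in> P2" unfolding P2_def P_def using a b nr by auto
      have "\<exists>ST. Pw (p a, p b) ST"
        using nr unfolding regp_def Pw_def by (auto simp: not_le)
      then have "Pw (p a, p b) (wit (p a, p b))"
        unfolding wit_def by (rule someI_ex)
      then have w: "fst (wit (p a, p b)) \<subseteq> p a \<and> snd (wit (p a, p b)) \<subseteq> p b \<and>
        \<bar>eS A (fst (wit (p a, p b))) (snd (wit (p a, p b))) - dens A (p a) (p b) * card (fst (wit (p a, p b))) * card (snd (wit (p a, p b)))\<bar>
          > e * card (p a) * card (p b)"
        unfolding Pw_def by simp
      have "fst (wit (p a, p b)) \<in> W" "snd (wit (p a, p b)) \<in> W"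
        unfolding W_def using inP2 by auto
      then show ?thesis using w by blast
    qed
    define q where "q = refine p W"
    have q: "pfun V q" unfolding q_def by (rule pfun_refine[OF p])
    have qsub: "\<forall>a\<in>V. q a \<subseteq> p0 a" using sub refine_sub unfolding q_def by (metis order_trans)
    have cq: "card (q ` V) \<le> tb t0 (Suc n)"
    proof -
      have "card (q ` V) \<le> card P * 2 ^ card W" unfolding q_def P_def by (rule card_refine[OF fin finW])
      also have "\<dots> \<le> tb t0 n * 2 ^ (2 * (tb t0 n)\<^sup>2)"
      proof (rule mult_mono)
        show "card P \<le> tb t0 n" using cp unfolding P_def .
        have "card W \<le> 2 * (tb t0 n)\<^sup>2" using cW cp unfolding P_def
          by (meson le_trans mult_le_mono2 power_mono zero_le)
        then show "(2::nat) ^ card W \<le> 2 ^ (2 * (tb t0 n)\<^sup>2)" by (rule power_increasing) simp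
      qed auto
      finally show ?thesis by simp
    qed
    have inc: "energy A V q \<ge> energy A V p + e\<^sup>2 * irrw A e V p"
      unfolding q_def by (rule increment[OF p fin _ witp]) (use e in auto)
    have "e\<^sup>2 * irrw A e V p \<ge> e\<^sup>2 * (e * (card V)\<^sup>2)"
      using False e by (intro mult_left_mono) auto
    then have "energy A V q \<ge> n * e ^ 3 * (card V)\<^sup>2 + e ^ 3 * (card V)\<^sup>2"
      using inc en by (simp add: power2_eq_square power3_eq_cube mult_ac)
    then have "energy A V q \<ge> (Suc n) * e ^ 3 * (card V)\<^sup>2" by (simp add: algebra_simps)
    then show ?thesis using q qsub cq by blast
  qed
qed

lemma regularity:
  fixes e :: real
  assumes fin: "finite V" and p0: "pfun V p0" and t0: "card (p0 ` V) \<le> t0" and e: "e > 0"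
    and A01: "\<And>a b. 0 \<le> A a b \<and> A a b \<le> 1"
  shows "\<exists>p. pfun V p \<and> (\<forall>a\<in>V. p a \<subseteq> p0 a) \<and> card (p ` V) \<le> tb t0 (nat \<lceil>1 / e ^ 3\<rceil> + 1) \<and>
    irrw A e V p \<le> e * (card V)\<^sup>2"
proof -
  define n where "n = nat \<lceil>1 / e ^ 3\<rceil> + 1"
  obtain p where p: "pfun V p" and sub: "\<forall>a\<in>V. p a \<subseteq> p0 a" and cp: "card (p ` V) \<le> tb t0 n"
    and alt: "irrw A e V p \<le> e * (card V)\<^sup>2 \<or> energy A V p \<ge> n * e ^ 3 * (card V)\<^sup>2"
    using iter[OF fin p0 t0 e, of n A] by blast
  have "irrw A e V p \<le> e * (card V)\<^sup>2"
  proof (cases "card V = 0")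
    case True
    then have "V = {}" using fin by simp
    then show ?thesis unfolding irrw_def by simp
  next
    case False
    have e3: "e ^ 3 > 0" using e by simp
    have "real (nat \<lceil>1 / e ^ 3\<rceil>) \<ge> 1 / e ^ 3" by (rule real_nat_ceiling_ge)
    then have "real n > 1 / e ^ 3" unfolding n_def by simp
    then have "real n * e ^ 3 > 1" using e3 by (simp add: field_simps)
    moreover have "(real (card V))\<^sup>2 > 0" using False by simp
    ultimately have "real n * e ^ 3 * (real (card V))\<^sup>2 > (real (card V))\<^sup>2" by simp
    moreover have "energy A V p \<le> (real (card V))\<^sup>2" by (rule energy_le[of A V p, OF A01 p fin])
    ultimately have "\<not> energy A V p \<ge> real n * e ^ 3 * (real (card V))\<^sup>2" by linarith
    then show ?thesis using alt by simp
  qed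
  then show ?thesis using p sub cp unfolding n_def by blast
qed


lemma sum_PiE_split:
  fixes F :: "('i \<Rightarrow> 'a) \<Rightarrow> real"
  assumes i: "i \<in> I" and fin: "finite I"
  shows "(\<Sum>v\<in>PiE I Q. F v) = (\<Sum>a\<in>Q i. \<Sum>w\<in>PiE (I - {i}) Q. F (w(i := a)))"
proof -
  have I: "I = insert i (I - {i})" using i by blast
  have "(\<Sum>v\<in>PiE I Q. F v) = (\<Sum>v\<in>PiE (insert i (I - {i})) Q. F v)" using I by simp
  also have "\<dots> = (\<Sum>v\<in>(\<lambda>(y, g). g(i := y)) ` (Q i \<times> PiE (I - {i}) Q). F v)"
    by (simp only: PiE_insert_eq)
  also have "\<dots> = (\<Sum>x\<in>Q i \<times> PiE (I - {i}) Q. F ((\<lambda>(y, g). g(i := y)) x))"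
    by (rule sum.reindex[unfolded comp_def]) (rule inj_combinator, simp)
  also have "\<dots> = (\<Sum>a\<in>Q i. \<Sum>w\<in>PiE (I - {i}) Q. F (w(i := a)))"
    by (simp add: sum.cartesian_product split_beta)
  finally show ?thesis .
qed

lemma sum_pos_part:
  fixes f h :: "'a \<Rightarrow> real"
  assumes fin: "finite X" and f: "\<And>x. x \<in> X \<Longrightarrow> 0 \<le> f x \<and> f x \<le> 1"
  shows "(\<Sum>x\<in>X. f x * h x) \<le> (\<Sum>x\<in>{x\<in>X. h x > 0}. h x)"
    and "(\<Sum>x\<in>X. f x * h x) \<ge> (\<Sum>x\<in>{x\<in>X. h x < 0}. h x)"
proof -
  have "(\<Sum>x\<in>X. f x * h x) \<le> (\<Sum>x\<in>X. if h x > 0 then h x else 0)"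
  proof (intro sum_mono)
    fix x assume x: "x \<in> X"
    show "f x * h x \<le> (if h x > 0 then h x else 0)"
    proof (cases "h x > 0")
      case True then show ?thesis using f[OF x] by (simp add: mult_left_le_one_le)
    next
      case False then show ?thesis using f[OF x] by (simp add: mult_nonneg_nonpos not_less)
    qed
  qed
  also have "\<dots> = (\<Sum>x\<in>{x\<in>X. h x > 0}. h x)" using fin by (simp add: sum.inter_filter)
  finally show "(\<Sum>x\<in>X. f x * h x) \<le> (\<Sum>x\<in>{x\<in>X. h x > 0}. h x)" .
  have "(\<Sum>x\<in>{x\<in>X. h x < 0}. h x) = (\<Sum>x\<in>X. if h x < 0 then h x else 0)" using fin by (simp add: sum.inter_filter)
  also have "\<dots> \<le> (\<Sum>x\<in>X. f x * h x)"
  proof (intro sum_mono)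
    fix x assume x: "x \<in> X"
    have "h x < 0 \<Longrightarrow> h x \<le> f x * h x"
    proof -
      assume hx: "h x < 0"
      have "f x * h x - h x = (1 - f x) * (- h x)" by (simp add: algebra_simps)
      also have "\<dots> \<ge> 0" using f[OF x] hx by (intro mult_nonneg_nonneg) auto
      finally show ?thesis by simp
    qed
    then show "(if h x < 0 then h x else 0) \<le> f x * h x"
      using f[OF x] by (cases "h x < 0") (auto simp: not_less)
  qed
  finally show "(\<Sum>x\<in>X. f x * h x) \<ge> (\<Sum>x\<in>{x\<in>X. h x < 0}. h x)" .
qed

lemma bilinear:
  fixes D :: "'a \<Rightarrow> 'b \<Rightarrow> real"
  assumes fX: "finite X" and fY: "finite Y"
    and f: "\<And>x. x \<in> X \<Longrightarrow> 0 \<le> f x \<and> f x \<le> 1"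
    and g: "\<And>y. y \<in> Y \<Longrightarrow> 0 \<le> g y \<and> g y \<le> 1"
    and D: "\<And>S T. S \<subseteq> X \<Longrightarrow> T \<subseteq> Y \<Longrightarrow> \<bar>\<Sum>a\<in>S. \<Sum>b\<in>T. D a b\<bar> \<le> \<beta>"
  shows "\<bar>\<Sum>a\<in>X. \<Sum>b\<in>Y. f a * g b * D a b\<bar> \<le> \<beta>"
proof -
  define h where "h a = (\<Sum>b\<in>Y. g b * D a b)" for a
  have eq: "(\<Sum>a\<in>X. \<Sum>b\<in>Y. f a * g b * D a b) = (\<Sum>a\<in>X. f a * h a)"
    unfolding h_def by (simp add: sum_distrib_left mult.assoc)
  have key: "(\<Sum>a\<in>S. h a) = (\<Sum>b\<in>Y. g b * (\<Sum>a\<in>S. D a b))" for S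
    unfolding h_def by (simp add: sum_distrib_left sum.swap[of _ S])
  define Sp where "Sp = {x\<in>X. h x > 0}"
  define Sm where "Sm = {x\<in>X. h x < 0}"
  have SpX: "Sp \<subseteq> X" and SmX: "Sm \<subseteq> X" unfolding Sp_def Sm_def by auto
  have up: "(\<Sum>a\<in>X. f a * h a) \<le> \<beta>"
  proof -
    define k where "k b = (\<Sum>a\<in>Sp. D a b)" for b
    have "(\<Sum>a\<in>X. f a * h a) \<le> (\<Sum>a\<in>Sp. h a)" unfolding Sp_def by (rule sum_pos_part(1)[OF fX f])
    also have "\<dots> = (\<Sum>b\<in>Y. g b * k b)" unfolding k_def by (rule key)
    also have "\<dots> \<le> (\<Sum>b\<in>{y\<in>Y. k y > 0}. k b)" by (rule sum_pos_part(1)[OF fY g])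
    also have "\<dots> = (\<Sum>a\<in>Sp. \<Sum>b\<in>{y\<in>Y. k y > 0}. D a b)" unfolding k_def by (rule sum.swap)
    also have "\<dots> \<le> \<beta>" using D[OF SpX, of "{y\<in>Y. k y > 0}"] by auto
    finally show ?thesis .
  qed
  have lo: "(\<Sum>a\<in>X. f a * h a) \<ge> - \<beta>"
  proof -
    define k where "k b = (\<Sum>a\<in>Sm. D a b)" for b
    have "- \<beta> \<le> (\<Sum>a\<in>Sm. \<Sum>b\<in>{y\<in>Y. k y < 0}. D a b)" using D[OF SmX, of "{y\<in>Y. k y < 0}"] by auto
    also have "\<dots> = (\<Sum>b\<in>{y\<in>Y. k y < 0}. k b)" unfolding k_def by (rule sum.swap)
    also have "\<dots> \<le> (\<Sum>b\<in>Y. g b * k b)" by (rule sum_pos_part(2)[OF fY g])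
    also have "\<dots> = (\<Sum>a\<in>Sm. h a)" unfolding k_def by (rule key[symmetric])
    also have "\<dots> \<le> (\<Sum>a\<in>X. f a * h a)" unfolding Sm_def by (rule sum_pos_part(2)[OF fX f])
    finally show ?thesis .
  qed
  show ?thesis unfolding eq using up lo by linarith
qed


lemma counting:
  fixes A :: "'a \<Rightarrow> 'a \<Rightarrow> real" and c :: "nat \<times> nat \<Rightarrow> real" and \<gamma> :: real
  assumes Es: "Es \<subseteq> {(i, j). i < j \<and> j < k}"
    and Q: "\<And>i. i < k \<Longrightarrow> finite (Q i)"
    and A: "\<And>a b. 0 \<le> A a b \<and> A a b \<le> 1"
    and c: "\<And>e. e \<in> Es \<Longrightarrow> 0 \<le> c e \<and> c e \<le> 1"
    and reg: "\<And>i j S T. (i, j) \<in> Es \<Longrightarrow> S \<subseteq> Q i \<Longrightarrow> T \<subseteq> Q j \<Longrightarrow>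
       \<bar>eS A S T - c (i, j) * card S * card T\<bar> \<le> \<gamma> * card (Q i) * card (Q j)"
  shows "\<bar>(\<Sum>v\<in>PiE {..<k} Q. \<Prod>e\<in>Es. A (v (fst e)) (v (snd e))) - (\<Prod>e\<in>Es. c e) * (\<Prod>i<k. real (card (Q i)))\<bar>
     \<le> real (card Es) * \<gamma> * (\<Prod>i<k. real (card (Q i)))"
proof -
  have finEs: "finite Es"
    by (rule finite_subset[OF Es]) (rule finite_subset[of _ "{..<k} \<times> {..<k}"], auto)
  define I where "I = {..<k}"
  define K where "K = (\<Prod>i\<in>I. real (card (Q i)))"
  have finI: "finite I" unfolding I_def by simp
  show ?thesis
    unfolding I_def[symmetric] K_def[symmetric]
    using finEs Es c reg
  proof (induction Es rule: finite_induct)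
    case empty
    have "(\<Sum>v\<in>PiE I Q. 1::real) = K" unfolding K_def using finI by (simp add: card_PiE)
    then show ?case by simp
  next
    case (insert e0 Es)
    obtain i j where e0: "e0 = (i, j)" by (cases e0)
    have ij: "i < j" "j < k" using insert.prems(1) e0 by auto
    have iI: "i \<in> I" and jI: "j \<in> I - {i}" using ij unfolding I_def by auto
    define P where "P v = (\<Prod>e\<in>Es. A (v (fst e)) (v (snd e)))" for v
    define C where "C = (\<Prod>e\<in>Es. c e)"
    define c0 where "c0 = c e0"
    define D where "D a b = A a b - c0" for a b
    have c0: "0 \<le> c0" "c0 \<le> 1" using insert.prems(2) unfolding c0_def by auto
    have IH: "\<bar>(\<Sum>v\<in>PiE I Q. P v) - C * K\<bar> \<le> real (card Es) * \<gamma> * K"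
      unfolding P_def C_def
      by (rule insert.IH) (use insert.prems in auto)
    have lhs: "(\<Sum>v\<in>PiE I Q. \<Prod>e\<in>insert e0 Es. A (v (fst e)) (v (snd e))) - (\<Prod>e\<in>insert e0 Es. c e) * K
      = (\<Sum>v\<in>PiE I Q. D (v i) (v j) * P v) + c0 * ((\<Sum>v\<in>PiE I Q. P v) - C * K)"
    proof -
      have "(\<Sum>v\<in>PiE I Q. \<Prod>e\<in>insert e0 Es. A (v (fst e)) (v (snd e))) = (\<Sum>v\<in>PiE I Q. A (v i) (v j) * P v)"
        unfolding P_def using insert.hyps e0 by simp
      moreover have "(\<Prod>e\<in>insert e0 Es. c e) = c0 * C" unfolding c0_def C_def using insert.hyps by simp
      moreover have "(\<Sum>v\<in>PiE I Q. D (v i) (v j) * P v) = (\<Sum>v\<in>PiE I Q. A (v i) (v j) * P v) - c0 * (\<Sum>v\<in>PiE I Q. P v)"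
        unfolding D_def by (simp add: left_diff_distrib sum_subtractf sum_distrib_left mult.assoc)
      ultimately show ?thesis by (simp add: algebra_simps)
    qed
    define J where "J = I - {i} - {j}"
    have finJ: "finite J" unfolding J_def using finI by simp
    define Ei where "Ei = {e\<in>Es. fst e = i \<or> snd e = i}"
    define fu where "fu u a = (\<Prod>e\<in>Ei. A ((u(i := a)) (fst e)) ((u(i := a)) (snd e)))" for u a
    define gu where "gu u b = (\<Prod>e\<in>Es - Ei. A ((u(j := b)) (fst e)) ((u(j := b)) (snd e)))" for u b
    have Pfac: "P (u(j := b, i := a)) = fu u a * gu u b" for u a b
    proof -
      have "P (u(j := b, i := a)) = (\<Prod>e\<in>Es - Ei. A ((u(j := b, i := a)) (fst e)) ((u(j := b, i := a)) (snd e))) *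
          (\<Prod>e\<in>Ei. A ((u(j := b, i := a)) (fst e)) ((u(j := b, i := a)) (snd e)))"
        unfolding P_def by (rule prod.subset_diff) (use insert.hyps in \<open>auto simp: Ei_def\<close>)
      also have "(\<Prod>e\<in>Ei. A ((u(j := b, i := a)) (fst e)) ((u(j := b, i := a)) (snd e))) = fu u a"
        unfolding fu_def
      proof (rule prod.cong[OF refl])
        fix e assume e: "e \<in> Ei"
        then have eEs: "e \<in> Es" and ei: "fst e = i \<or> snd e = i" unfolding Ei_def by auto
        have lt: "fst e < snd e" using eEs insert.prems(1) by auto
        have "e \<noteq> (i, j)" using eEs insert.hyps e0 by auto
        then have "fst e \<noteq> j" "snd e \<noteq> j" using ei lt ij by (cases e; auto)+
        then show "A ((u(j := b, i := a)) (fst e)) ((u(j := b, i := a)) (snd e)) = A ((u(i := a)) (fst e)) ((u(i := a)) (snd e))"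
          by simp
      qed
      also have "(\<Prod>e\<in>Es - Ei. A ((u(j := b, i := a)) (fst e)) ((u(j := b, i := a)) (snd e))) = gu u b"
        unfolding gu_def
      proof (rule prod.cong[OF refl])
        fix e assume e: "e \<in> Es - Ei"
        then have "fst e \<noteq> i" "snd e \<noteq> i" unfolding Ei_def by auto
        then show "A ((u(j := b, i := a)) (fst e)) ((u(j := b, i := a)) (snd e)) = A ((u(j := b)) (fst e)) ((u(j := b)) (snd e))"
          by simp
      qed
      finally show ?thesis by (rule trans) (rule mult.commute)
    qed
    have fu01: "0 \<le> fu u a \<and> fu u a \<le> 1" for u a
      unfolding fu_def using A by (auto intro: prod_nonneg prod_le_1)
    have gu01: "0 \<le> gu u b \<and> gu u b \<le> 1" for u b
      unfolding gu_def using A by (auto intro: prod_nonneg prod_le_1)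
    have T1eq: "(\<Sum>v\<in>PiE I Q. D (v i) (v j) * P v) =
        (\<Sum>u\<in>PiE J Q. \<Sum>a\<in>Q i. \<Sum>b\<in>Q j. fu u a * gu u b * D a b)"
    proof -
      have "(\<Sum>v\<in>PiE I Q. D (v i) (v j) * P v) = (\<Sum>a\<in>Q i. \<Sum>w\<in>PiE (I - {i}) Q. D a (w j) * P (w(i := a)))"
        using sum_PiE_split[OF iI finI, where Q=Q and F="\<lambda>v. D (v i) (v j) * P v"] ij by simp
      also have "\<dots> = (\<Sum>a\<in>Q i. \<Sum>b\<in>Q j. \<Sum>u\<in>PiE J Q. D a b * P (u(j := b, i := a)))"
      proof (rule sum.cong[OF refl])
        fix a
        show "(\<Sum>w\<in>PiE (I - {i}) Q. D a (w j) * P (w(i := a))) = (\<Sum>b\<in>Q j. \<Sum>u\<in>PiE J Q. D a b * P (u(j := b, i := a)))"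
          using sum_PiE_split[OF jI, where Q=Q and F="\<lambda>w. D a (w j) * P (w(i := a))"] finI unfolding J_def by simp
      qed
      also have "\<dots> = (\<Sum>a\<in>Q i. \<Sum>u\<in>PiE J Q. \<Sum>b\<in>Q j. D a b * P (u(j := b, i := a)))"
        by (rule sum.cong[OF refl], rule sum.swap)
      also have "\<dots> = (\<Sum>u\<in>PiE J Q. \<Sum>a\<in>Q i. \<Sum>b\<in>Q j. D a b * P (u(j := b, i := a)))"
        by (rule sum.swap)
      also have "\<dots> = (\<Sum>u\<in>PiE J Q. \<Sum>a\<in>Q i. \<Sum>b\<in>Q j. fu u a * gu u b * D a b)"
        by (simp add: Pfac mult_ac)
      finally show ?thesis .
    qed
    have finQi: "finite (Q i)" and finQj: "finite (Q j)" using Q ij by auto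
    have Dreg: "\<bar>\<Sum>a\<in>S. \<Sum>b\<in>T. D a b\<bar> \<le> \<gamma> * card (Q i) * card (Q j)" if "S \<subseteq> Q i" "T \<subseteq> Q j" for S T
    proof -
      have "(\<Sum>a\<in>S. \<Sum>b\<in>T. D a b) = eS A S T - c0 * card S * card T"
        unfolding D_def eS_def by (simp add: sum_subtractf)
      then show ?thesis using insert.prems(3)[of i j S T] that e0 c0_def by simp
    qed
    have T1: "\<bar>\<Sum>v\<in>PiE I Q. D (v i) (v j) * P v\<bar> \<le> \<gamma> * K"
    proof -
      have "\<bar>\<Sum>v\<in>PiE I Q. D (v i) (v j) * P v\<bar> \<le> (\<Sum>u\<in>PiE J Q. \<bar>\<Sum>a\<in>Q i. \<Sum>b\<in>Q j. fu u a * gu u b * D a b\<bar>)"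
        unfolding T1eq by (rule sum_abs)
      also have "\<dots> \<le> (\<Sum>u\<in>PiE J Q. \<gamma> * card (Q i) * card (Q j))"
        by (intro sum_mono bilinear[OF finQi finQj] fu01 gu01 Dreg)
      also have "\<dots> = \<gamma> * K"
      proof -
        have r1: "(\<Prod>l\<in>I. real (card (Q l))) = real (card (Q i)) * (\<Prod>l\<in>I - {i}. real (card (Q l)))"
          by (rule prod.remove[OF finI iI])
        have r2: "(\<Prod>l\<in>I - {i}. real (card (Q l))) = real (card (Q j)) * (\<Prod>l\<in>J. real (card (Q l)))"
          unfolding J_def by (rule prod.remove) (use finI jI in auto)
        have "K = real (card (Q i)) * (real (card (Q j)) * (\<Prod>l\<in>J. real (card (Q l))))"
          unfolding K_def r1 r2 ..
        moreover have "card (PiE J Q) = (\<Prod>l\<in>J. card (Q l))" using finJ by (rule card_PiE)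
        ultimately show ?thesis by simp
      qed
      finally show ?thesis .
    qed
    have T2: "\<bar>c0 * ((\<Sum>v\<in>PiE I Q. P v) - C * K)\<bar> \<le> real (card Es) * \<gamma> * K"
    proof -
      have "\<bar>c0 * ((\<Sum>v\<in>PiE I Q. P v) - C * K)\<bar> = c0 * \<bar>(\<Sum>v\<in>PiE I Q. P v) - C * K\<bar>"
        using c0 by (simp add: abs_mult)
      also have "\<dots> \<le> 1 * \<bar>(\<Sum>v\<in>PiE I Q. P v) - C * K\<bar>" using c0 by (intro mult_right_mono) auto
      finally show ?thesis using IH by simp
    qed
    have "card (insert e0 Es) = Suc (card Es)" using insert.hyps by simp
    then show ?case unfolding lhs using T1 T2 by (simp add: algebra_simps) linarith?
  qed
qed


lemma pair_marg:
  fixes \<phi> :: "'a \<Rightarrow> 'a \<Rightarrow> real"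
  assumes fin: "finite I" and x: "x \<in> I" and y: "y \<in> I" and xy: "x \<noteq> y"
  shows "(\<Sum>c\<in>PiE I B. \<phi> (c x) (c y)) = real (card (PiE (I - {x} - {y}) B)) * (\<Sum>a\<in>B x. \<Sum>b\<in>B y. \<phi> a b)"
proof -
  have y': "y \<in> I - {x}" using y xy by simp
  have "(\<Sum>c\<in>PiE I B. \<phi> (c x) (c y)) = (\<Sum>a\<in>B x. \<Sum>w\<in>PiE (I - {x}) B. \<phi> a (w y))"
    using sum_PiE_split[OF x fin, where Q=B and F="\<lambda>c. \<phi> (c x) (c y)"] xy by simp
  also have "\<dots> = (\<Sum>a\<in>B x. \<Sum>b\<in>B y. \<Sum>u\<in>PiE (I - {x} - {y}) B. \<phi> a b)"
  proof (rule sum.cong[OF refl])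
    fix a
    show "(\<Sum>w\<in>PiE (I - {x}) B. \<phi> a (w y)) = (\<Sum>b\<in>B y. \<Sum>u\<in>PiE (I - {x} - {y}) B. \<phi> a b)"
      using sum_PiE_split[OF y', where Q=B and F="\<lambda>w. \<phi> a (w y)"] fin by simp
  qed
  also have "\<dots> = (\<Sum>a\<in>B x. \<Sum>b\<in>B y. real (card (PiE (I - {x} - {y}) B)) * \<phi> a b)"
    by simp
  also have "\<dots> = real (card (PiE (I - {x} - {y}) B)) * (\<Sum>a\<in>B x. \<Sum>b\<in>B y. \<phi> a b)"
    by (simp add: sum_distrib_left)
  finally show ?thesis .
qed

lemma edge_count:
  assumes G: "is_graph V E" and fin: "finite V" and sym: "\<And>u v. Pr u v \<Longrightarrow> Pr v u"
  shows "2 * real (card {e\<in>E. \<exists>u v. e = {u, v} \<and> Pr u v}) =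
    (\<Sum>a\<in>V. \<Sum>b\<in>V. of_bool ({a, b} \<in> E \<and> Pr a b))"
proof -
  define Y where "Y = {e\<in>E. \<exists>u v. e = {u, v} \<and> Pr u v}"
  define X where "X = {ab \<in> V \<times> V. {fst ab, snd ab} \<in> E \<and> Pr (fst ab) (snd ab)}"
  define F where "F e = {ab \<in> X. {fst ab, snd ab} = e}" for e
  have finX: "finite X" unfolding X_def using fin by simp
  have EV: "\<And>e. e \<in> E \<Longrightarrow> \<exists>u v. u \<in> V \<and> v \<in> V \<and> u \<noteq> v \<and> e = {u, v}"
    using G unfolding is_graph_def by blast
  have finE: "finite E"
  proof -
    have "E \<subseteq> Pow V" using EV by blast
    then show ?thesis using fin by (meson finite_Pow_iff finite_subset)
  qed
  have finY: "finite Y" unfolding Y_def using finE by simp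
  have XU: "X = (\<Union>e\<in>Y. F e)"
  proof
    show "X \<subseteq> (\<Union>e\<in>Y. F e)"
    proof
      fix ab assume ab: "ab \<in> X"
      then have "{fst ab, snd ab} \<in> Y" unfolding X_def Y_def by blast
      then show "ab \<in> (\<Union>e\<in>Y. F e)" unfolding F_def using ab by blast
    qed
    show "(\<Union>e\<in>Y. F e) \<subseteq> X" unfolding F_def by blast
  qed
  have F2: "card (F e) = 2" if e: "e \<in> Y" for e
  proof -
    obtain u v where uv: "e = {u, v}" "Pr u v" and eE: "e \<in> E" using e unfolding Y_def by blast
    obtain u' v' where u'v': "u' \<in> V" "v' \<in> V" "u' \<noteq> v'" "e = {u', v'}" using EV[OF eE] by blast
    have uV: "u \<in> V" "v \<in> V" "u \<noteq> v" using uv u'v' by (auto simp: doubleton_eq_iff)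
    have "F e = {(u, v), (v, u)}"
    proof
      show "F e \<subseteq> {(u, v), (v, u)}" unfolding F_def uv(1) by (auto simp: doubleton_eq_iff)
      show "{(u, v), (v, u)} \<subseteq> F e" unfolding F_def X_def using uV uv eE sym by (auto simp: insert_commute)
    qed
    then show ?thesis using uV by simp
  qed
  have "card X = (\<Sum>e\<in>Y. card (F e))"
    unfolding XU by (rule card_UN_disjoint) (use finY finX in \<open>auto simp: F_def\<close>)
  also have "\<dots> = 2 * card Y" using F2 by simp
  finally have cX: "card X = 2 * card Y" .
  have "(\<Sum>a\<in>V. \<Sum>b\<in>V. of_bool ({a, b} \<in> E \<and> Pr a b)) = (\<Sum>ab\<in>V \<times> V. (of_bool ({fst ab, snd ab} \<in> E \<and> Pr (fst ab) (snd ab)) :: real))"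
    by (simp add: sum.cartesian_product case_prod_beta)
  also have "\<dots> = real (card X)" unfolding X_def using fin by (simp add: Int_def)
  finally show ?thesis using cX unfolding Y_def by simp
qed

lemma cube_finite: "finite (cube d)"
  unfolding cube_def using finite_lists_length_eq[of "UNIV :: bool set" d] by simp

lemma cube_card: "card (cube d) = 2 ^ d"
  unfolding cube_def using card_lists_length_eq[of "UNIV :: bool set" d] by simp

lemma delta_sym: "delta x y = delta y x"
  unfolding delta_def by (simp add: eq_commute)

lemma delta_range:
  assumes x: "x \<in> cube d" and y: "y \<in> cube d" and xy: "x \<noteq> y"
  shows "1 \<le> delta x y \<and> delta x y \<le> d"
proof -
  have lx: "length x = d" and ly: "length y = d" using x y unfolding cube_def by auto
  have "\<exists>i<d. x ! i \<noteq> y ! i"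
  proof (rule ccontr)
    assume "\<not> (\<exists>i<d. x ! i \<noteq> y ! i)"
    then have "x = y" using lx ly by (intro nth_equalityI) auto
    then show False using xy by simp
  qed
  then obtain i where i: "i < d" "x ! i \<noteq> y ! i" by blast
  have "(LEAST i. x ! i \<noteq> y ! i) \<le> i" using i(2) by (rule Least_le)
  then show ?thesis unfolding delta_def using i(1) by simp
qed


locale Lsetup =
  fixes d m :: nat and R E' :: "(bool list \<times> nat) set set" and k :: nat and EF :: "nat set set"
    and \<gamma> \<theta> \<eta> :: real and p :: "bool list \<times> nat \<Rightarrow> (bool list \<times> nat) set"
  assumes d1: "d \<ge> 1" and m1: "m \<ge> 1"
    and Rg: "is_graph (cube d \<times> {1..m}) R" and E'R: "E' \<subseteq> R"
    and pfunp: "pfun (cube d \<times> {1..m}) p"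
    and psub: "\<And>a. a \<in> cube d \<times> {1..m} \<Longrightarrow> p a \<subseteq> block m (fst a)"
begin

definition "VV = cube d \<times> {1..m}"
definition "AA a b = (of_bool ({a, b} \<in> E') :: real)"
definition "small a \<longleftrightarrow> real (card (p a)) < \<eta> * m"
definition "good0 a b \<longleftrightarrow> \<not> small a \<and> regp AA \<gamma> (p a) (p b) \<and> fst a \<noteq> fst b \<and>
   \<theta> * 2 powr (real (delta (fst a) (fst b)) - real d) \<le> dens AA (p a) (p b)"
definition "good a b \<longleftrightarrow> good0 a b \<and> good0 b a"
definition "Gc c = {{x, y} | x y. x \<in> cube d \<and> y \<in> cube d \<and> x \<noteq> y \<and> good (c x) (c y)}"

lemma finV: "finite VV"
  unfolding VV_def using cube_finite by simp

lemma pV: "pfun VV p" using pfunp unfolding VV_def .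

lemma AA01: "0 \<le> AA a b \<and> AA a b \<le> 1"
  unfolding AA_def by simp

lemma AA_sym: "AA a b = AA b a"
  unfolding AA_def by (simp add: insert_commute)

lemma good_sym: "good a b = good b a"
  unfolding good_def by blast

lemma block_sub: "x \<in> cube d \<Longrightarrow> block m x \<subseteq> VV"
  unfolding block_def VV_def by auto

lemma p_fin: "a \<in> VV \<Longrightarrow> finite (p a)"
  using pfun_subD[OF pV] finV finite_subset by blast

lemma p_ne: assumes a: "a \<in> VV" shows "card (p a) > 0"
proof -
  have "p a \<noteq> {}" using pfun_memD[OF pV a] by (metis empty_iff)
  then show ?thesis using p_fin[OF a] by (simp add: card_gt_0_iff)
qed

lemma p_fst: assumes a: "a \<in> VV" and b: "b \<in> p a" shows "fst b = fst a"
proof -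
  have "b \<in> block m (fst a)" using psub[of a] a b unfolding VV_def by (rule_tac subsetD) auto
  then show ?thesis unfolding block_def by (simp add: mem_Times_iff)
qed

lemma Gc_graph: "is_graph (cube d) (Gc c)"
  unfolding is_graph_def Gc_def by blast

lemma Gc_mem:
  assumes x: "x \<in> cube d" and y: "y \<in> cube d" and xy: "x \<noteq> y"
  shows "{x, y} \<in> Gc c \<longleftrightarrow> good (c x) (c y)"
proof
  assume "{x, y} \<in> Gc c"
  then obtain x' y' where e: "{x, y} = {x', y'}" and g: "good (c x') (c y')" unfolding Gc_def by blast
  then show "good (c x) (c y)" using good_sym[of "c x'" "c y'"] by (auto simp: doubleton_eq_iff)
next
  assume "good (c x) (c y)" then show "{x, y} \<in> Gc c" unfolding Gc_def using x y xy by blast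
qed

lemma dens_sym: "dens AA X Y = dens AA Y X"
  unfolding dens_def eS_def by (simp add: sum.swap[of _ X] AA_sym mult.commute)

lemma lifting:
  assumes pat: "is_ordered_pattern k EF"
    and c: "c \<in> PiE (cube d) (block m)"
    and copy: "contains_ordered_copy lexless (cube d) (Gc c) k EF"
    and th: "0 < \<theta>'" "\<theta>' \<le> 1" "\<And>x y. x \<in> cube d \<Longrightarrow> y \<in> cube d \<Longrightarrow> x \<noteq> y \<Longrightarrow> \<theta>' \<le> \<theta> * 2 powr (real (delta x y) - real d)"
    and gam: "real (k * k) * \<gamma> < \<theta>' ^ (k * k)" and gam0: "\<gamma> \<ge> 0"
  shows "contains_ordered_copy blockless VV E' k EF"
proof -
  obtain f where fV: "\<forall>i<k. f i \<in> cube d" and flt: "\<forall>i j. i < j \<longrightarrow> j < k \<longrightarrow> lexless (f i) (f j)"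
    and fE: "\<forall>i j. {i, j} \<in> EF \<longrightarrow> {f i, f j} \<in> Gc c"
    using copy unfolding contains_ordered_copy_def by blast
  have EFp: "\<And>i j. {i, j} \<in> EF \<Longrightarrow> i \<noteq> j \<and> i < k \<and> j < k"
  proof -
    fix i j assume "{i, j} \<in> EF"
    then obtain u v where "u \<in> {0..<k}" "v \<in> {0..<k}" "u \<noteq> v" "{i, j} = {u, v}"
      using pat unfolding is_ordered_pattern_def is_graph_def by blast
    then show "i \<noteq> j \<and> i < k \<and> j < k" by (auto simp: doubleton_eq_iff)
  qed
  have cV: "c x \<in> VV" if "x \<in> cube d" for x
    using c that block_sub unfolding PiE_def Pi_def by blast
  have cfst: "fst (c x) = x" if "x \<in> cube d" for x
    using c that unfolding PiE_def Pi_def block_def by auto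
  define Q where "Q i = p (c (f i))" for i
  define Es where "Es = {(i, j). i < j \<and> {i, j} \<in> EF}"
  define cc where "cc e = dens AA (Q (fst e)) (Q (snd e))" for e
  have Es: "Es \<subseteq> {(i, j). i < j \<and> j < k}" unfolding Es_def using EFp by auto
  have finEs: "finite Es"
    by (rule finite_subset[OF Es]) (rule finite_subset[of _ "{..<k} \<times> {..<k}"], auto)
  have cardEs: "card Es \<le> k * k"
  proof -
    have "card Es \<le> card ({..<k} \<times> {..<k})" using Es by (intro card_mono) auto
    then show ?thesis by (simp add: card_cartesian_product)
  qed
  have fne: "f i \<noteq> f j" if "i < j" "j < k" for i j
    using flt that unfolding lexless_def by blast
  have goodE: "good (c (f i)) (c (f j))" if "(i, j) \<in> Es" for i j
  proof -
    have ij: "i < j" "j < k" "{i, j} \<in> EF" using that Es unfolding Es_def by auto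
    have "{f i, f j} \<in> Gc c" using fE ij by blast
    then show ?thesis using Gc_mem[of "f i" "f j" c] fV ij fne[OF ij(1,2)] by auto
  qed
  have QV: "finite (Q i)" "card (Q i) > 0" if "i < k" for i
    unfolding Q_def using p_fin p_ne cV fV that by auto
  have reg: "\<bar>eS AA S T - cc (i, j) * card S * card T\<bar> \<le> \<gamma> * card (Q i) * card (Q j)"
    if "(i, j) \<in> Es" "S \<subseteq> Q i" "T \<subseteq> Q j" for i j S T
    using goodE[OF that(1)] that(2,3) unfolding good_def good0_def regp_def cc_def Q_def by auto
  have cc01: "0 \<le> cc e \<and> cc e \<le> 1" if "e \<in> Es" for e
  proof -
    have "fst e < k" "snd e < k" using that Es by auto
    then show ?thesis unfolding cc_def using dens_bounds[OF _ QV(1) QV(1)] AA01 by auto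
  qed
  have ccth: "\<theta>' \<le> cc e" if "e \<in> Es" for e
  proof -
    obtain i j where e: "e = (i, j)" by (cases e)
    have ij: "i < j" "j < k" using that Es e by auto
    have g: "good0 (c (f i)) (c (f j))" using goodE that e unfolding good_def by auto
    have "\<theta>' \<le> \<theta> * 2 powr (real (delta (f i) (f j)) - real d)"
      using th(3) fV ij fne[OF ij] by auto
    also have "\<dots> \<le> cc e" using g unfolding good0_def cc_def e Q_def using cfst fV ij by auto
    finally show ?thesis .
  qed
  define KK where "KK = (\<Prod>i<k. real (card (Q i)))"
  have KK: "KK > 0" unfolding KK_def using QV by (intro prod_pos) auto
  have cnt: "\<bar>(\<Sum>v\<in>PiE {..<k} Q. \<Prod>e\<in>Es. AA (v (fst e)) (v (snd e))) - (\<Prod>e\<in>Es. cc e) * KK\<bar>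
     \<le> real (card Es) * \<gamma> * KK"
    unfolding KK_def by (rule counting[where A=AA and Q=Q and Es=Es and k=k and c=cc and \<gamma>=\<gamma>, OF Es QV(1) AA01 cc01 reg]) auto
  have "(\<Prod>e\<in>Es. \<theta>') \<le> (\<Prod>e\<in>Es. cc e)"
    using ccth th(1) by (intro prod_mono) auto
  moreover have "\<theta>' ^ (k * k) \<le> \<theta>' ^ card Es"
    using cardEs th by (intro power_decreasing) auto
  ultimately have pc: "\<theta>' ^ (k * k) \<le> (\<Prod>e\<in>Es. cc e)" by simp
  have "real (card Es) * \<gamma> \<le> real (k * k) * \<gamma>"
  proof (intro mult_right_mono gam0)
    show "real (card Es) \<le> real (k * k)" using cardEs by (simp only: of_nat_le_iff)
  qed
  then have "real (card Es) * \<gamma> < (\<Prod>e\<in>Es. cc e)" using pc gam by linarith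
  then have "real (card Es) * \<gamma> * KK < (\<Prod>e\<in>Es. cc e) * KK" using KK by simp
  then have pos: "(\<Sum>v\<in>PiE {..<k} Q. \<Prod>e\<in>Es. AA (v (fst e)) (v (snd e))) > 0" using cnt by linarith
  have "\<exists>v\<in>PiE {..<k} Q. (\<Prod>e\<in>Es. AA (v (fst e)) (v (snd e))) > 0"
  proof (rule ccontr)
    assume "\<not> (\<exists>v\<in>PiE {..<k} Q. (\<Prod>e\<in>Es. AA (v (fst e)) (v (snd e))) > 0)"
    then have "\<forall>v\<in>PiE {..<k} Q. (\<Prod>e\<in>Es. AA (v (fst e)) (v (snd e))) \<le> 0" by (simp add: not_less)
    then have "(\<Sum>v\<in>PiE {..<k} Q. \<Prod>e\<in>Es. AA (v (fst e)) (v (snd e))) \<le> 0" by (intro sum_nonpos) auto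
    then show False using pos by simp
  qed
  then obtain v where v: "v \<in> PiE {..<k} Q" and vpos: "(\<Prod>e\<in>Es. AA (v (fst e)) (v (snd e))) > 0"
    by blast
  have vE: "{v i, v j} \<in> E'" if "(i, j) \<in> Es" for i j
  proof (rule ccontr)
    assume "{v i, v j} \<notin> E'"
    then have "AA (v (fst (i, j))) (v (snd (i, j))) = 0" unfolding AA_def by simp
    then have "(\<Prod>e\<in>Es. AA (v (fst e)) (v (snd e))) = 0" using that finEs by (intro prod_zero) (auto intro!: bexI[of _ "(i, j)"])
    then show False using vpos by simp
  qed
  have vQ: "v i \<in> Q i" if "i < k" for i using v that by auto
  have vV: "v i \<in> VV" if "i < k" for i
    using vQ[OF that] pfun_subD[OF pV cV[OF fV[rule_format, OF that]]] unfolding Q_def by blast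
  have vfst: "fst (v i) = f i" if "i < k" for i
    using p_fst[OF cV[OF fV[rule_format, OF that]] vQ[OF that, unfolded Q_def]] cfst fV that by auto
  show ?thesis unfolding contains_ordered_copy_def
  proof (intro exI[of _ v] conjI allI impI)
    fix i assume "i < k" then show "v i \<in> VV" by (rule vV)
  next
    fix i j assume ij: "i < j" "j < k"
    then show "blockless (v i) (v j)" unfolding blockless_def using vfst flt by auto
  next
    fix i j assume e: "{i, j} \<in> EF"
    have ij: "i \<noteq> j" "i < k" "j < k" using EFp[OF e] by auto
    show "{v i, v j} \<in> E'"
    proof (cases "i < j")
      case True then show ?thesis using vE e unfolding Es_def by auto
    next
      case False
      then have "j < i" using ij by simp
      moreover have "{j, i} \<in> EF" using e by (simp add: insert_commute)
      ultimately have "{v j, v i} \<in> E'" using vE unfolding Es_def by auto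
      then show ?thesis by (simp add: insert_commute)
    qed
  qed
qed

end


lemma tau_rel:
  assumes "1 \<le> l" "l \<le> d"
  shows "2 powr (real l - real d) = 2 ^ d / (2 * tau l d)"
proof -
  have e: "2 * d - l = Suc (2 * d - l - 1)" using assms by simp
  have t: "2 * tau l d = 2 ^ (2 * d - l)" unfolding tau_def by (subst (2) e) simp
  have "2 powr (real l - real d) * 2 ^ (2 * d - l) = 2 powr (real l - real d) * 2 powr real (2 * d - l)"
    by (simp add: powr_realpow)
  also have "\<dots> = 2 powr (real l - real d + real (2 * d - l))" by (simp add: powr_add)
  also have "real l - real d + real (2 * d - l) = real d" using assms by (simp add: of_nat_diff)
  also have "(2::real) powr real d = 2 ^ d" by (simp add: powr_realpow)
  finally show ?thesis unfolding t by (simp add: field_simps)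
qed

context Lsetup
begin

lemma regroup:
  fixes F :: "bool list \<Rightarrow> bool list \<times> nat \<Rightarrow> real"
  shows "(\<Sum>x\<in>cube d. \<Sum>a\<in>block m x. F x a) = (\<Sum>a\<in>VV. F (fst a) a)"
proof -
  have "(\<Sum>a\<in>VV. F (fst a) a) = (\<Sum>x\<in>cube d. \<Sum>i\<in>{1..m}. F x (x, i))"
    unfolding VV_def by (simp add: sum.cartesian_product split_beta)
  also have "\<dots> = (\<Sum>x\<in>cube d. \<Sum>a\<in>block m x. F x a)"
  proof (rule sum.cong[OF refl])
    fix x
    have "(\<Sum>a\<in>block m x. F x a) = (\<Sum>a\<in>{x} \<times> {1..m}. F x a)" unfolding block_def ..
    also have "{x} \<times> {1..m} = Pair x ` {1..m}" by auto
    also have "(\<Sum>a\<in>Pair x ` {1..m}. F x a) = (\<Sum>i\<in>{1..m}. F x (x, i))"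
      by (simp add: sum.reindex inj_on_def)
    finally show "(\<Sum>i\<in>{1..m}. F x (x, i)) = (\<Sum>a\<in>block m x. F x a)" by simp
  qed
  finally show ?thesis by simp
qed

lemma regroup2:
  fixes F :: "bool list \<Rightarrow> bool list \<Rightarrow> bool list \<times> nat \<Rightarrow> bool list \<times> nat \<Rightarrow> real"
  shows "(\<Sum>x\<in>cube d. \<Sum>y\<in>cube d. \<Sum>a\<in>block m x. \<Sum>b\<in>block m y. F x y a b) =
    (\<Sum>a\<in>VV. \<Sum>b\<in>VV. F (fst a) (fst b) a b)"
proof -
  have "(\<Sum>x\<in>cube d. \<Sum>y\<in>cube d. \<Sum>a\<in>block m x. \<Sum>b\<in>block m y. F x y a b) =
     (\<Sum>x\<in>cube d. \<Sum>a\<in>block m x. \<Sum>y\<in>cube d. \<Sum>b\<in>block m y. F x y a b)"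
    by (rule sum.cong[OF refl], rule sum.swap)
  also have "\<dots> = (\<Sum>a\<in>VV. \<Sum>y\<in>cube d. \<Sum>b\<in>block m y. F (fst a) y a b)"
    by (rule regroup)
  also have "\<dots> = (\<Sum>a\<in>VV. \<Sum>b\<in>VV. F (fst a) (fst b) a b)"
    by (rule sum.cong[OF refl], rule regroup)
  finally show ?thesis .
qed

lemma Phi_eq:
  "(\<Sum>l=1..d. real (level_edges (Gc c) l) / tau l d) =
    (\<Sum>x\<in>cube d. \<Sum>y\<in>cube d. of_bool (x \<noteq> y \<and> good (c x) (c y)) / (2 * tau (delta x y) d))"
proof -
  have le: "2 * real (level_edges (Gc c) l) =
     (\<Sum>x\<in>cube d. \<Sum>y\<in>cube d. of_bool (x \<noteq> y \<and> good (c x) (c y) \<and> delta x y = l))" for l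
  proof -
    have "2 * real (level_edges (Gc c) l) = (\<Sum>x\<in>cube d. \<Sum>y\<in>cube d. of_bool ({x, y} \<in> Gc c \<and> (x \<noteq> y \<and> delta x y = l)))"
      unfolding level_edges_def
      by (rule edge_count[OF Gc_graph cube_finite]) (auto simp: delta_sym)
    also have "\<dots> = (\<Sum>x\<in>cube d. \<Sum>y\<in>cube d. of_bool (x \<noteq> y \<and> good (c x) (c y) \<and> delta x y = l))"
      by (intro sum.cong refl) (auto simp: Gc_mem)
    finally show ?thesis .
  qed
  have "(\<Sum>l=1..d. real (level_edges (Gc c) l) / tau l d) =
      (\<Sum>l=1..d. \<Sum>x\<in>cube d. \<Sum>y\<in>cube d. of_bool (x \<noteq> y \<and> good (c x) (c y) \<and> delta x y = l) / (2 * tau l d))"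
  proof (rule sum.cong[OF refl])
    fix l
    show "real (level_edges (Gc c) l) / tau l d =
      (\<Sum>x\<in>cube d. \<Sum>y\<in>cube d. of_bool (x \<noteq> y \<and> good (c x) (c y) \<and> delta x y = l) / (2 * tau l d))"
    proof -
      have "real (level_edges (Gc c) l) / tau l d = (2 * real (level_edges (Gc c) l)) / (2 * tau l d)" by simp
      then show ?thesis unfolding le[of l] by (simp add: sum_divide_distrib)
    qed
  qed
  also have "\<dots> = (\<Sum>x\<in>cube d. \<Sum>y\<in>cube d. \<Sum>l=1..d. of_bool (x \<noteq> y \<and> good (c x) (c y) \<and> delta x y = l) / (2 * tau l d))"
    by (subst sum.swap) (rule sum.cong[OF refl], rule sum.swap)
  also have "\<dots> = (\<Sum>x\<in>cube d. \<Sum>y\<in>cube d. of_bool (x \<noteq> y \<and> good (c x) (c y)) / (2 * tau (delta x y) d))"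
  proof (intro sum.cong refl)
    fix x y assume x: "x \<in> cube d" and y: "y \<in> cube d"
    show "(\<Sum>l=1..d. of_bool (x \<noteq> y \<and> good (c x) (c y) \<and> delta x y = l) / (2 * tau l d)) =
      of_bool (x \<noteq> y \<and> good (c x) (c y)) / (2 * tau (delta x y) d)"
    proof (cases "x \<noteq> y \<and> good (c x) (c y)")
      case False
      have "(\<Sum>l=1..d. of_bool (x \<noteq> y \<and> good (c x) (c y) \<and> delta x y = l) / (2 * tau l d)) = 0"
        by (rule sum.neutral) (use False in auto)
      moreover have "(of_bool (x \<noteq> y \<and> good (c x) (c y)) :: real) = 0" using False by simp
      ultimately show ?thesis by (simp only: div_0)
    next
      case True
      then have r: "delta x y \<in> {1..d}" using delta_range[OF x y] by auto
      have "(\<Sum>l=1..d. of_bool (x \<noteq> y \<and> good (c x) (c y) \<and> delta x y = l) / (2 * tau l d)) =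
        (\<Sum>l\<in>{1..d}. if delta x y = l then 1 / (2 * tau l d) else 0)"
        using True by (intro sum.cong refl) auto
      also have "\<dots> = 1 / (2 * tau (delta x y) d)" using r by (simp add: sum.delta)
      finally show ?thesis using True by simp
    qed
  qed
  finally show ?thesis .
qed

lemma card_PiE_rest:
  assumes x: "x \<in> cube d" and y: "y \<in> cube d" and xy: "x \<noteq> y"
  shows "card (PiE (cube d - {x} - {y}) (block m)) = m ^ (2 ^ d - 2)"
proof -
  have cb: "card (block m z) = m" for z unfolding block_def by (simp add: card_cartesian_product)
  have "card (PiE (cube d - {x} - {y}) (block m)) = (\<Prod>z\<in>cube d - {x} - {y}. card (block m z))"
    by (rule card_PiE) (simp add: cube_finite)
  also have "\<dots> = m ^ card (cube d - {x} - {y})" by (simp add: cb)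
  also have "card (cube d - {x} - {y}) = 2 ^ d - 2"
    using x y xy cube_finite by (simp add: card_Diff_singleton_if cube_card)
  finally show ?thesis .
qed

lemma card_C: "card (PiE (cube d) (block m)) = m ^ (2 ^ d)"
proof -
  have cb: "card (block m z) = m" for z unfolding block_def by (simp add: card_cartesian_product)
  show ?thesis by (simp add: card_PiE cube_finite cb cube_card)
qed

lemma sum_over_C:
  "(\<Sum>c\<in>PiE (cube d) (block m). \<Sum>x\<in>cube d. \<Sum>y\<in>cube d. of_bool (x \<noteq> y \<and> good (c x) (c y)) / (2 * tau (delta x y) d))
   = real m ^ (2 ^ d - 2) * (\<Sum>a\<in>VV. \<Sum>b\<in>VV. of_bool (fst a \<noteq> fst b \<and> good a b) / (2 * tau (delta (fst a) (fst b)) d))"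
proof -
  have "(\<Sum>c\<in>PiE (cube d) (block m). \<Sum>x\<in>cube d. \<Sum>y\<in>cube d. of_bool (x \<noteq> y \<and> good (c x) (c y)) / (2 * tau (delta x y) d))
    = (\<Sum>x\<in>cube d. \<Sum>y\<in>cube d. \<Sum>c\<in>PiE (cube d) (block m). of_bool (x \<noteq> y \<and> good (c x) (c y)) / (2 * tau (delta x y) d))"
    by (subst sum.swap) (rule sum.cong[OF refl], rule sum.swap)
  also have "\<dots> = (\<Sum>x\<in>cube d. \<Sum>y\<in>cube d. \<Sum>a\<in>block m x. \<Sum>b\<in>block m y.
        real m ^ (2 ^ d - 2) * (of_bool (x \<noteq> y \<and> good a b) / (2 * tau (delta x y) d)))"
  proof (intro sum.cong refl)
    fix x y assume x: "x \<in> cube d" and y: "y \<in> cube d"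
    show "(\<Sum>c\<in>PiE (cube d) (block m). of_bool (x \<noteq> y \<and> good (c x) (c y)) / (2 * tau (delta x y) d)) =
      (\<Sum>a\<in>block m x. \<Sum>b\<in>block m y. real m ^ (2 ^ d - 2) * (of_bool (x \<noteq> y \<and> good a b) / (2 * tau (delta x y) d)))"
    proof (cases "x = y")
      case True then show ?thesis by simp
    next
      case False
      have "(\<Sum>c\<in>PiE (cube d) (block m). of_bool (x \<noteq> y \<and> good (c x) (c y)) / (2 * tau (delta x y) d)) =
        real (card (PiE (cube d - {x} - {y}) (block m))) * (\<Sum>a\<in>block m x. \<Sum>b\<in>block m y. of_bool (x \<noteq> y \<and> good a b) / (2 * tau (delta x y) d))"
        by (rule pair_marg[OF cube_finite x y False, where B="block m" and \<phi>="\<lambda>a b. of_bool (x \<noteq> y \<and> good a b) / (2 * tau (delta x y) d)"])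
      also have "\<dots> = (\<Sum>a\<in>block m x. \<Sum>b\<in>block m y. real m ^ (2 ^ d - 2) * (of_bool (x \<noteq> y \<and> good a b) / (2 * tau (delta x y) d)))"
        using card_PiE_rest[OF x y False] by (simp add: sum_distrib_left)
      finally show ?thesis .
    qed
  qed
  also have "\<dots> = (\<Sum>a\<in>VV. \<Sum>b\<in>VV. real m ^ (2 ^ d - 2) * (of_bool (fst a \<noteq> fst b \<and> good a b) / (2 * tau (delta (fst a) (fst b)) d)))"
    by (rule regroup2)
  also have "\<dots> = real m ^ (2 ^ d - 2) * (\<Sum>a\<in>VV. \<Sum>b\<in>VV. of_bool (fst a \<noteq> fst b \<and> good a b) / (2 * tau (delta (fst a) (fst b)) d))"
    by (simp add: sum_distrib_left)
  finally show ?thesis .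
qed

end


context Lsetup
begin

definition "errpt a b = of_bool (small a) + of_bool (small b) + of_bool (\<not> regp AA \<gamma> (p a) (p b))
   + of_bool (\<not> regp AA \<gamma> (p b) (p a)) + \<theta>"

lemma finR: "finite R"
proof -
  have "R \<subseteq> Pow VV" using Rg unfolding is_graph_def VV_def by blast
  then show ?thesis using finV by (meson finite_Pow_iff finite_subset)
qed

lemma block_fin: "finite (block m x)" unfolding block_def by simp

lemma eS_le_eb:
  assumes x: "x \<in> cube d" and y: "y \<in> cube d" and xy: "x \<noteq> y"
    and P: "P \<subseteq> block m x" and Q: "Q \<subseteq> block m y"
  shows "eS AA P Q \<le> real (edges_between R P Q)"
proof -
  have fP: "finite P" using P block_fin finite_subset by blast
  have fQ: "finite Q" using Q block_fin finite_subset by blast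
  have disj: "P \<inter> Q = {}" using P Q xy unfolding block_def by auto
  define Z where "Z = {ab \<in> P \<times> Q. {fst ab, snd ab} \<in> E'}"
  have "eS AA P Q = (\<Sum>ab\<in>P \<times> Q. (of_bool ({fst ab, snd ab} \<in> E') :: real))"
    unfolding eS_def AA_def by (simp add: sum.cartesian_product split_beta)
  also have "\<dots> = real (card Z)" unfolding Z_def using fP fQ by (simp add: Int_def)
  also have "card Z = card ((\<lambda>ab. {fst ab, snd ab}) ` Z)"
  proof (rule card_image[symmetric], rule inj_onI)
    fix u v assume u: "u \<in> Z" and v: "v \<in> Z" and e: "{fst u, snd u} = {fst v, snd v}"
    have "fst u \<in> P" "snd u \<in> Q" "fst v \<in> P" "snd v \<in> Q" using u v unfolding Z_def by auto
    then have "fst u = fst v \<and> snd u = snd v" using e disj by (auto simp: doubleton_eq_iff)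
    then show "u = v" by (simp add: prod_eq_iff)
  qed
  also have "\<dots> \<le> edges_between R P Q" unfolding edges_between_def
  proof (rule card_mono)
    show "finite {e \<in> R. \<exists>p\<in>P. \<exists>q\<in>Q. e = {p, q}}" using finR by simp
    show "(\<lambda>ab. {fst ab, snd ab}) ` Z \<subseteq> {e \<in> R. \<exists>p\<in>P. \<exists>q\<in>Q. e = {p, q}}"
    proof
      fix e assume "e \<in> (\<lambda>ab. {fst ab, snd ab}) ` Z"
      then obtain ab where ab: "ab \<in> Z" "e = {fst ab, snd ab}" by blast
      then have "fst ab \<in> P" "snd ab \<in> Q" "e \<in> E'" unfolding Z_def by auto
      then show "e \<in> {e \<in> R. \<exists>p\<in>P. \<exists>q\<in>Q. e = {p, q}}" using E'R ab(2) by blast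
    qed
  qed
  finally show ?thesis by simp
qed

lemma UU_le1: "a \<in> VV \<Longrightarrow> b \<in> VV \<Longrightarrow> 0 \<le> UU AA p a b \<and> UU AA p a b \<le> 1"
  unfolding UU_def using dens_bounds[OF _ p_fin p_fin] AA01 by auto

lemma pointwise:
  assumes eps: "eps \<ge> 0" and th: "\<theta> \<ge> 0"
    and ii: "\<And>x y P Q. x \<in> cube d \<Longrightarrow> y \<in> cube d \<Longrightarrow> x \<noteq> y \<Longrightarrow> P \<subseteq> block m x \<Longrightarrow> Q \<subseteq> block m y \<Longrightarrow>
       real (card P) \<ge> real m powr (2/3) \<Longrightarrow> real (card Q) \<ge> real m powr (2/3) \<Longrightarrow>
       real (edges_between R P Q) \<le> (1 + eps) * 2 powr (real (delta x y) - real d) * card P * card Q"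
    and etam: "\<eta> * m \<ge> real m powr (2/3)"
    and a: "a \<in> VV" and b: "b \<in> VV" and ab: "fst a \<noteq> fst b"
  shows "UU AA p a b \<le> (1 + eps) * 2 powr (real (delta (fst a) (fst b)) - real d) * of_bool (good a b) + errpt a b"
proof -
  define w where "w = 2 powr (real (delta (fst a) (fst b)) - real d)"
  have xa: "fst a \<in> cube d" and xb: "fst b \<in> cube d" using a b unfolding VV_def by auto
  have "real (delta (fst a) (fst b)) - real d \<le> 0" using delta_range[OF xa xb ab] by simp
  then have w1: "w \<le> 1" unfolding w_def using powr_mono[of "real (delta (fst a) (fst b)) - real d" 0 "2::real"] by simp
  have w0: "w \<ge> 0" unfolding w_def by simp
  have pa: "p a \<subseteq> block m (fst a)" and pb: "p b \<subseteq> block m (fst b)" using psub a b unfolding VV_def by auto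
  have U01: "0 \<le> UU AA p a b" "UU AA p a b \<le> 1" using UU_le1[OF a b] by auto
  have err0: "errpt a b \<ge> 0" unfolding errpt_def using th by simp
  show ?thesis
  proof (cases "good a b")
    case True
    then have nsa: "\<not> small a" and nsb: "\<not> small b" unfolding good_def good0_def by auto
    have ca: "real (card (p a)) \<ge> real m powr (2/3)" using nsa etam unfolding small_def by simp
    have cb: "real (card (p b)) \<ge> real m powr (2/3)" using nsb etam unfolding small_def by simp
    have "eS AA (p a) (p b) \<le> real (edges_between R (p a) (p b))"
      by (rule eS_le_eb[OF xa xb ab pa pb])
    also have "\<dots> \<le> (1 + eps) * w * card (p a) * card (p b)"
      unfolding w_def by (rule ii[OF xa xb ab pa pb ca cb])
    finally have "eS AA (p a) (p b) \<le> (1 + eps) * w * (card (p a) * card (p b))" by (simp add: mult.assoc)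
    moreover have "real (card (p a)) * card (p b) > 0" using p_ne[OF a] p_ne[OF b] by simp
    ultimately have "UU AA p a b \<le> (1 + eps) * w"
      unfolding UU_def dens_def by (simp add: divide_le_eq)
    then show ?thesis using True err0 unfolding w_def by simp
  next
    case False
    have "UU AA p a b \<le> errpt a b"
    proof (cases "small a \<or> small b \<or> \<not> regp AA \<gamma> (p a) (p b) \<or> \<not> regp AA \<gamma> (p b) (p a)")
      case True
      then have "errpt a b \<ge> 1" unfolding errpt_def using th by auto
      then show ?thesis using U01 by simp
    next
      case c2: False
      have "\<not> (\<theta> * w \<le> dens AA (p a) (p b)) \<or> \<not> (\<theta> * 2 powr (real (delta (fst b) (fst a)) - real d) \<le> dens AA (p b) (p a))"
        using False c2 ab unfolding good_def good0_def w_def by auto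
      then have "dens AA (p a) (p b) < \<theta> * w" using dens_sym[of "p a" "p b"] delta_sym[of "fst a" "fst b"]
        unfolding w_def by auto
      also have "\<theta> * w \<le> \<theta>" using w1 th by (simp add: mult_left_le)
      finally show ?thesis unfolding UU_def errpt_def by simp
    qed
    then show ?thesis using False by simp
  qed
qed

lemma small_card:
  assumes "\<eta> \<ge> 0"
  shows "real (card {a\<in>VV. small a}) \<le> real (card (p ` VV)) * (\<eta> * m)"
proof -
  define SS where "SS = {X \<in> p ` VV. real (card X) < \<eta> * m}"
  have "{a\<in>VV. small a} \<subseteq> \<Union>SS"
  proof
    fix a assume "a \<in> {a\<in>VV. small a}"
    then have a: "a \<in> VV" and sa: "small a" by auto
    have "p a \<in> SS" unfolding SS_def using a sa unfolding small_def by simp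
    then show "a \<in> \<Union>SS" using pfun_memD[OF pV a] by (rule UnionI)
  qed
  moreover have "finite (\<Union>SS)"
  proof (rule finite_Union)
    show "finite SS" unfolding SS_def using finV by simp
    fix X assume "X \<in> SS"
    then obtain a where "a \<in> VV" "X = p a" unfolding SS_def by blast
    then show "finite X" using p_fin by simp
  qed
  ultimately have "card {a\<in>VV. small a} \<le> card (\<Union>SS)"
    by (intro card_mono)
  also have "\<dots> \<le> sum card SS" by (rule card_Union_le_sum_card)
  finally have "real (card {a\<in>VV. small a}) \<le> real (sum card SS)" by (simp only: of_nat_le_iff)
  also have "real (sum card SS) = (\<Sum>X\<in>SS. real (card X))" by (rule of_nat_sum)
  also have "\<dots> \<le> (\<Sum>X\<in>SS. \<eta> * m)" unfolding SS_def by (intro sum_mono) auto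
  also have "\<dots> = real (card SS) * (\<eta> * m)" by simp
  also have "\<dots> \<le> real (card (p ` VV)) * (\<eta> * m)"
  proof (rule mult_right_mono)
    show "real (card SS) \<le> real (card (p ` VV))" unfolding SS_def using finV by (simp add: card_mono)
  qed (use assms in simp)
  finally show ?thesis .
qed

lemma err_sum:
  "(\<Sum>a\<in>VV. \<Sum>b\<in>VV. errpt a b) =
   2 * real (card VV) * real (card {a\<in>VV. small a}) + 2 * irrw AA \<gamma> VV p + \<theta> * real (card VV) ^ 2"
proof -
  have s1: "(\<Sum>a\<in>VV. \<Sum>b\<in>VV. (of_bool (small a) :: real)) = real (card VV) * real (card {a\<in>VV. small a})"
    using finV by (simp add: Int_def)
  have s2: "(\<Sum>a\<in>VV. \<Sum>b\<in>VV. (of_bool (small b) :: real)) = real (card VV) * real (card {a\<in>VV. small a})"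
    using finV by (simp add: Int_def)
  have s3: "(\<Sum>a\<in>VV. \<Sum>b\<in>VV. (of_bool (\<not> regp AA \<gamma> (p a) (p b)) :: real)) = irrw AA \<gamma> VV p"
    unfolding irrw_def by (intro sum.cong refl) simp
  have s4: "(\<Sum>a\<in>VV. \<Sum>b\<in>VV. (of_bool (\<not> regp AA \<gamma> (p b) (p a)) :: real)) = irrw AA \<gamma> VV p"
    unfolding s3[symmetric] by (rule sum.swap)
  have "(\<Sum>a\<in>VV. \<Sum>b\<in>VV. errpt a b) =
    (\<Sum>a\<in>VV. \<Sum>b\<in>VV. (of_bool (small a) :: real)) + (\<Sum>a\<in>VV. \<Sum>b\<in>VV. (of_bool (small b) :: real))
    + (\<Sum>a\<in>VV. \<Sum>b\<in>VV. (of_bool (\<not> regp AA \<gamma> (p a) (p b)) :: real))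
    + (\<Sum>a\<in>VV. \<Sum>b\<in>VV. (of_bool (\<not> regp AA \<gamma> (p b) (p a)) :: real)) + (\<Sum>a\<in>VV. \<Sum>b\<in>VV. \<theta>)"
    unfolding errpt_def by (simp only: sum.distrib)
  also have "\<dots> = 2 * real (card VV) * real (card {a\<in>VV. small a}) + 2 * irrw AA \<gamma> VV p + \<theta> * real (card VV) ^ 2"
    unfolding s1 s2 s3 s4 by (simp add: power2_eq_square)
  finally show ?thesis .
qed

end


context Lsetup
begin

lemma meas_fst: "meas VV p (\<lambda>a b. of_bool (fst a \<noteq> fst b))"
  unfolding meas_def
proof (intro ballI impI)
  fix a a' b b' assume a: "a \<in> VV" and a': "a' \<in> VV" and b: "b \<in> VV" and b': "b' \<in> VV"
    and e1: "p a = p a'" and e2: "p b = p b'"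
  have "a' \<in> p a" using pfun_memD[OF pV a'] e1 by simp
  then have f1: "fst a' = fst a" by (rule p_fst[OF a])
  have "b' \<in> p b" using pfun_memD[OF pV b'] e2 by simp
  then have f2: "fst b' = fst b" by (rule p_fst[OF b])
  show "(of_bool (fst a \<noteq> fst b) :: real) = of_bool (fst a' \<noteq> fst b')" using f1 f2 by simp
qed

lemma cross_bound:
  assumes eps: "eps \<ge> 0" and th: "\<theta> \<ge> 0"
    and ii: "\<And>x y P Q. x \<in> cube d \<Longrightarrow> y \<in> cube d \<Longrightarrow> x \<noteq> y \<Longrightarrow> P \<subseteq> block m x \<Longrightarrow> Q \<subseteq> block m y \<Longrightarrow>
       real (card P) \<ge> real m powr (2/3) \<Longrightarrow> real (card Q) \<ge> real m powr (2/3) \<Longrightarrow>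
       real (edges_between R P Q) \<le> (1 + eps) * 2 powr (real (delta x y) - real d) * card P * card Q"
    and etam: "\<eta> * m \<ge> real m powr (2/3)"
    and Phi: "\<And>c. c \<in> PiE (cube d) (block m) \<Longrightarrow> (\<Sum>l=1..d. real (level_edges (Gc c) l) / tau l d) < B"
  shows "(\<Sum>a\<in>VV. \<Sum>b\<in>VV. AA a b * of_bool (fst a \<noteq> fst b)) \<le>
     (1 + eps) * 2 ^ d * (real m)\<^sup>2 * B + (\<Sum>a\<in>VV. \<Sum>b\<in>VV. errpt a b)"
proof -
  define C where "C = PiE (cube d) (block m)"
  define W where "W = (\<Sum>a\<in>VV. \<Sum>b\<in>VV. of_bool (fst a \<noteq> fst b \<and> good a b) / (2 * tau (delta (fst a) (fst b)) d))"
  define K where "K = real m ^ (2 ^ d - 2)"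
  have K0: "K > 0" unfolding K_def using m1 by simp
  have finC: "finite C" unfolding C_def using cube_finite block_fin by (simp add: finite_PiE)
  have neC: "C \<noteq> {}" unfolding C_def using m1 by (simp add: PiE_eq_empty_iff block_def)
  have d2: "2 ^ d \<ge> (2::nat)" using d1 by (metis power_increasing power_one_right one_le_numeral)
  have cC: "real (card C) = K * (real m)\<^sup>2"
  proof -
    have "real (card C) = real m ^ (2 ^ d)" unfolding C_def by (simp add: card_C)
    also have "(2::nat) ^ d = (2 ^ d - 2) + 2" using d2 by simp
    then have "real m ^ (2 ^ d) = real m ^ (2 ^ d - 2) * real m ^ 2" by (metis power_add)
    finally show ?thesis unfolding K_def by simp
  qed
  have "(\<Sum>c\<in>C. \<Sum>l=1..d. real (level_edges (Gc c) l) / tau l d) = K * W"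
  proof -
    have "(\<Sum>c\<in>C. \<Sum>l=1..d. real (level_edges (Gc c) l) / tau l d) =
      (\<Sum>c\<in>C. \<Sum>x\<in>cube d. \<Sum>y\<in>cube d. of_bool (x \<noteq> y \<and> good (c x) (c y)) / (2 * tau (delta x y) d))"
      by (intro sum.cong refl Phi_eq)
    also have "\<dots> = K * W" unfolding C_def K_def W_def by (rule sum_over_C)
    finally show ?thesis .
  qed
  moreover have "(\<Sum>c\<in>C. \<Sum>l=1..d. real (level_edges (Gc c) l) / tau l d) < (\<Sum>c\<in>C. B)"
    using finC neC Phi unfolding C_def by (intro sum_strict_mono) auto
  moreover have "(\<Sum>c\<in>C. B) = K * ((real m)\<^sup>2 * B)" using cC by (simp add: mult.assoc)
  ultimately have "K * W < K * ((real m)\<^sup>2 * B)" by linarith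
  then have WB: "W < (real m)\<^sup>2 * B" using K0 by simp
  have X: "(\<Sum>a\<in>VV. \<Sum>b\<in>VV. AA a b * of_bool (fst a \<noteq> fst b)) =
     (\<Sum>a\<in>VV. \<Sum>b\<in>VV. UU AA p a b * of_bool (fst a \<noteq> fst b))"
    by (rule fact1[OF pV finV meas_fst])
  also have "\<dots> \<le> (\<Sum>a\<in>VV. \<Sum>b\<in>VV. (1 + eps) * 2 ^ d * (of_bool (fst a \<noteq> fst b \<and> good a b) / (2 * tau (delta (fst a) (fst b)) d)) + errpt a b)"
  proof (intro sum_mono)
    fix a b assume a: "a \<in> VV" and b: "b \<in> VV"
    have err0: "errpt a b \<ge> 0" unfolding errpt_def using th by simp
    show "UU AA p a b * of_bool (fst a \<noteq> fst b) \<le> (1 + eps) * 2 ^ d * (of_bool (fst a \<noteq> fst b \<and> good a b) / (2 * tau (delta (fst a) (fst b)) d)) + errpt a b"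
    proof (cases "fst a = fst b")
      case True then show ?thesis using err0 by simp
    next
      case False
      have xa: "fst a \<in> cube d" and xb: "fst b \<in> cube d" using a b unfolding VV_def by auto
      have r: "1 \<le> delta (fst a) (fst b)" "delta (fst a) (fst b) \<le> d" using delta_range[OF xa xb False] by auto
      have "UU AA p a b \<le> (1 + eps) * 2 powr (real (delta (fst a) (fst b)) - real d) * of_bool (good a b) + errpt a b"
        by (rule pointwise[OF eps th ii etam a b False])
      also have "2 powr (real (delta (fst a) (fst b)) - real d) = 2 ^ d / (2 * tau (delta (fst a) (fst b)) d)"
        by (rule tau_rel[OF r])
      finally show ?thesis using False by simp
    qed
  qed
  also have "\<dots> = (1 + eps) * 2 ^ d * W + (\<Sum>a\<in>VV. \<Sum>b\<in>VV. errpt a b)"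
    unfolding W_def by (simp add: sum.distrib sum_distrib_left)
  also have "\<dots> \<le> (1 + eps) * 2 ^ d * ((real m)\<^sup>2 * B) + (\<Sum>a\<in>VV. \<Sum>b\<in>VV. errpt a b)"
    using WB eps by (intro add_right_mono mult_left_mono) auto
  finally show ?thesis by (simp add: mult.assoc)
qed

end


lemma card_as_sum:
  assumes G: "is_graph V E" and fin: "finite V"
  shows "2 * real (card E) = (\<Sum>a\<in>V. \<Sum>b\<in>V. of_bool ({a, b} \<in> E))"
proof -
  have "{e\<in>E. \<exists>u v. e = {u, v} \<and> True} = E" using G unfolding is_graph_def by blast
  then show ?thesis using edge_count[OF G fin, of "\<lambda>u v. True"] by simp
qed

lemma ble_as_sum:
  assumes G: "is_graph V E" and fin: "finite V"
  shows "2 * real (block_level_edges E l) =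
    (\<Sum>a\<in>V. \<Sum>b\<in>V. of_bool ({a, b} \<in> E \<and> (fst a \<noteq> fst b \<and> delta (fst a) (fst b) = l)))"
  unfolding block_level_edges_def
  by (rule edge_count[OF G fin]) (auto simp: delta_sym)

lemma cross_as_ble:
  assumes G: "is_graph (cube d \<times> {1..m}) E"
  shows "(\<Sum>a\<in>cube d \<times> {1..m}. \<Sum>b\<in>cube d \<times> {1..m}. of_bool ({a, b} \<in> E) * of_bool (fst a \<noteq> fst b))
     = 2 * (\<Sum>l=1..d. real (block_level_edges E l))"
proof -
  define V where "V = cube d \<times> {1..m}"
  have fin: "finite V" unfolding V_def using cube_finite by simp
  have "2 * (\<Sum>l=1..d. real (block_level_edges E l)) =
     (\<Sum>l=1..d. \<Sum>a\<in>V. \<Sum>b\<in>V. of_bool ({a, b} \<in> E \<and> (fst a \<noteq> fst b \<and> delta (fst a) (fst b) = l)))"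
    unfolding sum_distrib_left using ble_as_sum[OF G[folded V_def] fin] by simp
  also have "\<dots> = (\<Sum>a\<in>V. \<Sum>b\<in>V. \<Sum>l=1..d. of_bool ({a, b} \<in> E \<and> (fst a \<noteq> fst b \<and> delta (fst a) (fst b) = l)))"
    by (subst sum.swap) (rule sum.cong[OF refl], rule sum.swap)
  also have "\<dots> = (\<Sum>a\<in>V. \<Sum>b\<in>V. of_bool ({a, b} \<in> E) * of_bool (fst a \<noteq> fst b))"
  proof (intro sum.cong refl)
    fix a b assume a: "a \<in> V" and b: "b \<in> V"
    show "(\<Sum>l=1..d. (of_bool ({a, b} \<in> E \<and> (fst a \<noteq> fst b \<and> delta (fst a) (fst b) = l)) :: real)) =
      of_bool ({a, b} \<in> E) * of_bool (fst a \<noteq> fst b)"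
    proof (cases "{a, b} \<in> E \<and> fst a \<noteq> fst b")
      case False
      have "(\<Sum>l=1..d. (of_bool ({a, b} \<in> E \<and> (fst a \<noteq> fst b \<and> delta (fst a) (fst b) = l)) :: real)) = 0"
        by (rule sum.neutral) (use False in auto)
      then show ?thesis using False by auto
    next
      case True
      have xa: "fst a \<in> cube d" and xb: "fst b \<in> cube d" using a b unfolding V_def by auto
      have r: "delta (fst a) (fst b) \<in> {1..d}" using delta_range[OF xa xb] True by auto
      have "(\<Sum>l=1..d. (of_bool ({a, b} \<in> E \<and> (fst a \<noteq> fst b \<and> delta (fst a) (fst b) = l)) :: real)) =
         (\<Sum>l\<in>{1..d}. if delta (fst a) (fst b) = l then 1 else 0)"
        using True by (intro sum.cong refl) auto
      also have "\<dots> = 1" using r by (simp add: sum.delta)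
      finally show ?thesis using True by simp
    qed
  qed
  finally show ?thesis unfolding V_def by simp
qed


lemma single_bound:
  fixes alpha eps0 \<theta> \<theta>' \<gamma> \<eta> :: real and R E' :: "(bool list \<times> nat) set set"
  assumes a0: "0 \<le> alpha" "alpha \<le> 1" and e0: "0 < eps0" "eps0 \<le> 1/2" and d1: "d \<ge> 1" and m1: "m \<ge> 1"
    and pat: "is_ordered_pattern k EF"
    and hyp: "\<forall>G. is_graph (cube d) G \<longrightarrow>
           (1 / real d) * (\<Sum>l=1..d. real (level_edges G l) / tau l d) \<ge> alpha + eps0 \<longrightarrow>
           contains_ordered_copy lexless (cube d) G k EF"
    and Rg: "is_graph (cube d \<times> {1..m}) R"
    and lev: "\<forall>l\<in>{1..d}. approx_eq eps0 (real (block_level_edges R l)) (2 ^ (d - 1) * real m ^ 2)"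
    and tot: "approx_eq eps0 (real (card R)) (real d * 2 ^ (d - 1) * real m ^ 2)"
    and ii: "\<forall>x\<in>cube d. \<forall>y\<in>cube d. \<forall>P Q. x \<noteq> y \<longrightarrow> P \<subseteq> block m x \<longrightarrow> Q \<subseteq> block m y \<longrightarrow>
            real (card P) \<ge> real m powr (2/3) \<longrightarrow> real (card Q) \<ge> real m powr (2/3) \<longrightarrow>
            real (edges_between R P Q)
              \<le> (1 + eps0) * 2 powr (real (delta x y) - real d) * real (card P) * real (card Q)"
    and E'R: "E' \<subseteq> R" and free: "\<not> contains_ordered_copy blockless (cube d \<times> {1..m}) E' k EF"
    and thdef: "\<theta> = eps0 / (2 ^ d) ^ 3" and th'def: "\<theta>' = \<theta> * 2 / 2 ^ d"
    and gpos: "\<gamma> > 0" and gle: "\<gamma> \<le> eps0 / (2 ^ d) ^ 3" and gk: "real (k * k) * \<gamma> < \<theta>' ^ (k * k)"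
    and etadef: "\<eta> = eps0 / ((2 ^ d) ^ 3 * (real (tb (2 ^ d) (nat \<lceil>1 / \<gamma> ^ 3\<rceil> + 1)) + 1))"
    and etam: "\<eta> * m \<ge> real m powr (2/3)"
  shows "real (card E') / real (card R) \<le> alpha + 30 * eps0"
proof -
  define V where "V = cube d \<times> {1..m}"
  define q where "q = (2::real) ^ d"
  define T where "T = tb (2 ^ d) (nat \<lceil>1 / \<gamma> ^ 3\<rceil> + 1)"
  define AA where "AA a b = (of_bool ({a, b} \<in> E') :: real)" for a b
  define p0 where "p0 a = block m (fst a)" for a :: "bool list \<times> nat"
  have q2: "q \<ge> 2"
  proof -
    have "(2::real) ^ 1 \<le> 2 ^ d" by (rule power_increasing) (use d1 in auto)
    then show ?thesis unfolding q_def by simp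
  qed
  have finV: "finite V" unfolding V_def using cube_finite by simp
  have AA01: "\<And>a b. 0 \<le> AA a b \<and> AA a b \<le> 1" unfolding AA_def by simp
  have p0pf: "pfun V p0"
    unfolding pfun_def
  proof (intro ballI conjI)
    fix a assume a: "a \<in> V"
    then obtain x i where ax: "a = (x, i)" "x \<in> cube d" "i \<in> {1..m}" unfolding V_def by auto
    show "a \<in> p0 a" unfolding p0_def block_def using ax by simp
    show "p0 a \<subseteq> V" unfolding p0_def block_def V_def using ax by auto
    fix b assume "b \<in> p0 a"
    then have "fst b = fst a" unfolding p0_def block_def by auto
    then show "p0 b = p0 a" unfolding p0_def by simp
  qed
  have t0: "card (p0 ` V) \<le> 2 ^ d"
  proof -
    have "p0 ` V \<subseteq> block m ` cube d" unfolding p0_def V_def by auto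
    then have "card (p0 ` V) \<le> card (block m ` cube d)" using cube_finite by (intro card_mono) auto
    also have "\<dots> \<le> card (cube d)" by (rule card_image_le[OF cube_finite])
    finally show ?thesis by (simp add: cube_card)
  qed
  obtain p where pp: "pfun V p" and sub: "\<forall>a\<in>V. p a \<subseteq> p0 a" and cp: "card (p ` V) \<le> T"
    and irr0: "irrw AA \<gamma> V p \<le> \<gamma> * real ((card V)\<^sup>2)"
    using regularity[of V p0 "2 ^ d" \<gamma> AA, OF finV p0pf t0 gpos AA01] unfolding T_def by blast
  have irr: "irrw AA \<gamma> V p \<le> \<gamma> * (real (card V))\<^sup>2" using irr0 by simp
  interpret L: Lsetup d m R E' k EF \<gamma> \<theta> \<eta> p
  proof
    show "1 \<le> d" using d1 .
    show "1 \<le> m" using m1 .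
    show "is_graph (cube d \<times> {1..m}) R" using Rg .
    show "E' \<subseteq> R" using E'R .
    show "pfun (cube d \<times> {1..m}) p" using pp unfolding V_def .
    fix a assume a: "a \<in> cube d \<times> {1..m}"
    have "p a \<subseteq> p0 a" by (rule bspec[OF sub[unfolded V_def] a])
    then show "p a \<subseteq> block m (fst a)" unfolding p0_def .
  qed
  have VV: "L.VV = V" by (simp add: L.VV_def V_def)
  have AAeq: "L.AA = AA" by (simp add: fun_eq_iff L.AA_def AA_def)
  have th0: "\<theta> \<ge> 0" unfolding thdef using e0 by simp
  have th'pos: "\<theta>' > 0" unfolding th'def thdef using e0 by simp
  have th'1: "\<theta>' \<le> 1"
  proof -
    have "q ^ 3 \<ge> 1" using one_le_power[of q 3] q2 by simp
    then have "eps0 / q ^ 3 \<le> eps0 / 1" using e0 q2 by (intro divide_left_mono) auto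
    then have "eps0 / q ^ 3 \<le> 1/2" using e0 by linarith
    moreover have "2 / q \<le> 1" using q2 by simp
    ultimately have "eps0 / q ^ 3 * (2 / q) \<le> 1/2 * 1"
      using e0 q2 by (intro mult_mono) auto
    moreover have "\<theta>' = eps0 / q ^ 3 * (2 / q)" unfolding th'def thdef q_def by simp
    ultimately show ?thesis by linarith
  qed
  have th3: "\<theta>' \<le> \<theta> * 2 powr (real (delta x y) - real d)"
    if x: "x \<in> cube d" and y: "y \<in> cube d" and xy: "x \<noteq> y" for x y
  proof -
    have "1 \<le> delta x y" using delta_range[OF x y xy] by simp
    then have "2 powr (1 - real d) \<le> 2 powr (real (delta x y) - real d)" by (intro powr_mono) auto
    moreover have "2 powr (1 - real d) = 2 / 2 ^ d" by (simp add: powr_diff powr_realpow)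
    ultimately have "2 / 2 ^ d \<le> 2 powr (real (delta x y) - real d)" by simp
    then have "\<theta> * (2 / 2 ^ d) \<le> \<theta> * 2 powr (real (delta x y) - real d)" using th0 by (rule mult_left_mono)
    then show ?thesis unfolding th'def by simp
  qed
  have Phi: "(\<Sum>l=1..d. real (level_edges (L.Gc c) l) / tau l d) < (alpha + eps0) * real d"
    if c: "c \<in> PiE (cube d) (block m)" for c
  proof (rule ccontr)
    assume "\<not> (\<Sum>l=1..d. real (level_edges (L.Gc c) l) / tau l d) < (alpha + eps0) * real d"
    then have "(alpha + eps0) * real d \<le> (\<Sum>l=1..d. real (level_edges (L.Gc c) l) / tau l d)" by simp
    then have "alpha + eps0 \<le> (1 / real d) * (\<Sum>l=1..d. real (level_edges (L.Gc c) l) / tau l d)"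
      using d1 by (simp add: field_simps)
    then have "contains_ordered_copy lexless (cube d) (L.Gc c) k EF" using hyp L.Gc_graph by blast
    then have "contains_ordered_copy blockless L.VV E' k EF"
      by (rule L.lifting[OF pat c _ th'pos th'1 th3 gk]) (use gpos in auto)
    then show False using free VV V_def by simp
  qed
  have ii': "real (edges_between R P Q) \<le> (1 + eps0) * 2 powr (real (delta x y) - real d) * card P * card Q"
    if "x \<in> cube d" "y \<in> cube d" "x \<noteq> y" "P \<subseteq> block m x" "Q \<subseteq> block m y"
       "real (card P) \<ge> real m powr (2/3)" "real (card Q) \<ge> real m powr (2/3)" for x y P Q
    using ii that by blast
  have cb: "(\<Sum>a\<in>V. \<Sum>b\<in>V. AA a b * of_bool (fst a \<noteq> fst b)) \<le>
     (1 + eps0) * 2 ^ d * (real m)\<^sup>2 * ((alpha + eps0) * real d) + (\<Sum>a\<in>V. \<Sum>b\<in>V. L.errpt a b)"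
    using L.cross_bound[OF _ th0 ii' etam Phi] e0 unfolding VV AAeq by simp
  have cardV: "real (card V) = q * m" unfolding V_def q_def by (simp add: card_cartesian_product cube_card)
  have q0: "q > 0" using q2 by simp
  have eta0: "\<eta> \<ge> 0" unfolding etadef using e0 by simp
  have Teta: "real T * \<eta> \<le> eps0 / q ^ 3"
  proof -
    have "real T * \<eta> = (eps0 / q ^ 3) * (real T / (real T + 1))" unfolding etadef T_def q_def by (simp add: field_simps)
    also have "\<dots> \<le> (eps0 / q ^ 3) * 1" using e0 q0 by (intro mult_left_mono) auto
    finally show ?thesis by simp
  qed
  have sm: "real (card {a\<in>V. L.small a}) \<le> real T * \<eta> * m"
  proof -
    have "real (card {a\<in>V. L.small a}) \<le> real (card (p ` V)) * (\<eta> * m)" using L.small_card[OF eta0] unfolding VV .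
    also have "\<dots> \<le> real T * (\<eta> * m)" using cp eta0 by (intro mult_right_mono) auto
    finally show ?thesis by (simp add: mult.assoc)
  qed
  have es: "(\<Sum>a\<in>V. \<Sum>b\<in>V. L.errpt a b) = 2 * real (card V) * real (card {a\<in>V. L.small a}) + 2 * irrw AA \<gamma> V p + \<theta> * real (card V) ^ 2"
    using L.err_sum unfolding VV AAeq .
  have A1: "2 * real (card V) * real (card {a\<in>V. L.small a}) \<le> 2 * eps0 * (real m)\<^sup>2"
  proof -
    have "2 * real (card V) * real (card {a\<in>V. L.small a}) \<le> 2 * (q * m) * (real T * \<eta> * m)"
      unfolding cardV using sm q0 by (intro mult_left_mono) auto
    also have "\<dots> = 2 * q * m\<^sup>2 * (real T * \<eta>)" by (simp add: power2_eq_square mult_ac)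
    also have "\<dots> \<le> 2 * q * m\<^sup>2 * (eps0 / q ^ 3)" using Teta q0 by (intro mult_left_mono) auto
    also have "\<dots> = 2 * eps0 * m\<^sup>2 / q\<^sup>2" using q0 by (simp add: field_simps power2_eq_square power3_eq_cube)
    also have "\<dots> \<le> 2 * eps0 * m\<^sup>2 / 1" using q2 e0 by (intro divide_left_mono) (auto simp: one_le_power)
    finally show ?thesis by simp
  qed
  have A2: "2 * irrw AA \<gamma> V p \<le> 2 * eps0 * (real m)\<^sup>2"
  proof -
    have "2 * irrw AA \<gamma> V p \<le> 2 * (\<gamma> * (q * m)\<^sup>2)" using irr unfolding cardV by simp
    also have "\<dots> \<le> 2 * (eps0 / q ^ 3 * (q * m)\<^sup>2)" using gle unfolding q_def by (intro mult_left_mono mult_right_mono) auto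
    also have "\<dots> = 2 * eps0 * m\<^sup>2 / q" using q0 by (simp add: field_simps power2_eq_square power3_eq_cube)
    also have "\<dots> \<le> 2 * eps0 * m\<^sup>2 / 1" using q2 e0 by (intro divide_left_mono) auto
    finally show ?thesis by simp
  qed
  have A3: "\<theta> * real (card V) ^ 2 \<le> eps0 * (real m)\<^sup>2"
  proof -
    have "\<theta> * real (card V) ^ 2 = eps0 * m\<^sup>2 / q" unfolding cardV thdef q_def[symmetric]
      using q0 by (simp add: field_simps power2_eq_square power3_eq_cube)
    also have "\<dots> \<le> eps0 * m\<^sup>2 / 1" using q2 e0 by (intro divide_left_mono) auto
    finally show ?thesis by simp
  qed
  have errb: "(\<Sum>a\<in>V. \<Sum>b\<in>V. L.errpt a b) \<le> 5 * eps0 * (real m)\<^sup>2"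
    using es A1 A2 A3 by linarith
  define P2 where "P2 = (2::real) ^ (d - 1)"
  have qP: "q = 2 * P2" unfolding q_def P2_def using d1 by (metis Suc_diff_1 le_numeral_extra(2) less_le_trans power_Suc zero_less_one)
  have P21: "P2 \<ge> 1" unfolding P2_def by simp
  define D0 where "D0 = real d * P2 * (real m)\<^sup>2"
  have mD0: "(real m)\<^sup>2 \<le> D0"
  proof -
    have "1 * (real m)\<^sup>2 \<le> (real d * P2) * (real m)\<^sup>2"
    proof (rule mult_right_mono)
      show "1 \<le> real d * P2" using d1 P21 by (metis mult_mono' of_nat_1 of_nat_le_iff one_le_numeral mult_1 zero_le_one)
    qed simp
    then show ?thesis unfolding D0_def by simp
  qed
  have D00: "D0 \<ge> 0" unfolding D0_def using P21 by simp
  have XE: "(\<Sum>a\<in>V. \<Sum>b\<in>V. AA a b * of_bool (fst a \<noteq> fst b)) \<le> 2 * (1 + eps0) * (alpha + eps0) * D0 + 5 * eps0 * D0"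
  proof -
    have "(1 + eps0) * 2 ^ d * (real m)\<^sup>2 * ((alpha + eps0) * real d) = 2 * (1 + eps0) * (alpha + eps0) * D0"
      unfolding D0_def q_def[symmetric] qP by (simp add: mult_ac)
    then show ?thesis using cb errb mD0 e0 by (smt (verit) mult_left_mono)
  qed
  define AR where "AR a b = (of_bool ({a, b} \<in> R) :: real)" for a b
  have E'g: "is_graph V E'" using Rg E'R unfolding is_graph_def V_def by blast
  have RgV: "is_graph V R" using Rg unfolding V_def .
  have twoE: "2 * real (card E') = (\<Sum>a\<in>V. \<Sum>b\<in>V. AA a b)" unfolding AA_def by (rule card_as_sum[OF E'g finV])
  have twoR: "2 * real (card R) = (\<Sum>a\<in>V. \<Sum>b\<in>V. AR a b)" unfolding AR_def by (rule card_as_sum[OF RgV finV])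
  have spl: "(\<Sum>a\<in>V. \<Sum>b\<in>V. f a b) = (\<Sum>a\<in>V. \<Sum>b\<in>V. f a b * of_bool (fst a \<noteq> fst b)) + (\<Sum>a\<in>V. \<Sum>b\<in>V. f a b * of_bool (fst a = fst b))"
    for f :: "bool list \<times> nat \<Rightarrow> bool list \<times> nat \<Rightarrow> real"
  proof -
    have "\<And>a b. f a b = f a b * of_bool (fst a \<noteq> fst b) + f a b * of_bool (fst a = fst b)" by simp
    then show ?thesis by (simp add: sum.distrib[symmetric])
  qed
  have YY: "(\<Sum>a\<in>V. \<Sum>b\<in>V. AA a b * of_bool (fst a = fst b)) \<le> (\<Sum>a\<in>V. \<Sum>b\<in>V. AR a b * of_bool (fst a = fst b))"
    unfolding AA_def AR_def using E'R by (intro sum_mono) auto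
  have XR: "(\<Sum>a\<in>V. \<Sum>b\<in>V. AR a b * of_bool (fst a \<noteq> fst b)) = 2 * (\<Sum>l=1..d. real (block_level_edges R l))"
    unfolding AR_def V_def by (rule cross_as_ble[OF Rg])
  have bl: "(\<Sum>l=1..d. real (block_level_edges R l)) \<ge> (1 - eps0) * D0"
  proof -
    have "(\<Sum>l=1..d. (1 - eps0) * (2 ^ (d - 1) * real m ^ 2)) \<le> (\<Sum>l=1..d. real (block_level_edges R l))"
      using lev unfolding approx_eq_def by (intro sum_mono) auto
    then show ?thesis unfolding D0_def P2_def by (simp add: mult_ac)
  qed
  have cR: "(1 - eps0) * D0 \<le> real (card R)" "real (card R) \<le> (1 + eps0) * D0"
    using tot unfolding approx_eq_def D0_def P2_def by (auto simp: mult_ac)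
  have E2: "2 * real (card E') \<le> (2 * (1 + eps0) * (alpha + eps0) + 9 * eps0) * D0"
    using twoE twoR spl[of AA] spl[of AR] YY XR bl cR XE by (simp add: algebra_simps) linarith?
  have key: "2 * (1 + eps0) * (alpha + eps0) + 9 * eps0 \<le> 2 * (alpha + 30 * eps0) * (1 - eps0)"
  proof -
    have "0 \<le> eps0 * (49 - 4 * alpha - 62 * eps0)" using e0 a0 by (intro mult_nonneg_nonneg) auto
    moreover have "2 * (alpha + 30 * eps0) * (1 - eps0) - (2 * (1 + eps0) * (alpha + eps0) + 9 * eps0) = eps0 * (49 - 4 * alpha - 62 * eps0)"
      by (simp add: algebra_simps)
    ultimately show ?thesis by linarith
  qed
  have "2 * real (card E') \<le> 2 * (alpha + 30 * eps0) * ((1 - eps0) * D0)"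
    using E2 mult_right_mono[OF key D00] by (simp add: mult_ac)
  also have "\<dots> \<le> 2 * (alpha + 30 * eps0) * real (card R)"
    using cR(1) a0 e0 by (intro mult_left_mono) auto
  finally have "2 * real (card E') \<le> 2 * ((alpha + 30 * eps0) * real (card R))" by (simp only: mult.assoc)
  then have fin: "real (card E') \<le> (alpha + 30 * eps0) * real (card R)" by linarith
  have Rpos: "real (card R) > 0"
  proof -
    have "(1 - eps0) * D0 > 0" using e0 d1 m1 P21 unfolding D0_def by (intro mult_pos_pos) auto
    then show ?thesis using cR(1) by linarith
  qed
  show ?thesis using fin Rpos by (simp add: divide_le_eq)
qed


lemma etam_lemma:
  fixes \<eta> :: real
  assumes eta: "\<eta> > 0" and mbig: "real m \<ge> (1 / \<eta>) ^ 3" and m1: "m \<ge> 1"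
  shows "\<eta> * m \<ge> real m powr (2/3)"
proof -
  define r where "r = real m powr (1/3)"
  have m0: "real m > 0" using m1 by simp
  have r0: "r > 0" unfolding r_def using m0 by simp
  have r3: "r ^ 3 = real m" unfolding r_def using m0 by (simp add: powr_power)
  have r1: "\<eta> * r \<ge> 1"
  proof (rule ccontr)
    assume "\<not> \<eta> * r \<ge> 1"
    then have "r < 1 / \<eta>" using eta by (simp add: field_simps)
    then have "r ^ 3 < (1 / \<eta>) ^ 3" using r0 by (intro power_strict_mono) auto
    then show False using r3 mbig by simp
  qed
  have e23: "(2/3 :: real) = 1 - 1/3" by simp
  have "real m powr (2/3) = real m powr (1 - 1/3)" by (subst e23) (rule refl)
  also have "\<dots> = real m powr 1 / real m powr (1/3)" by (rule powr_diff)
  also have "\<dots> = real m / r" unfolding r_def using m0 by simp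
  also have "\<dots> \<le> \<eta> * m"
    using r1 r0 m0 by (simp add: divide_le_eq)
  finally show ?thesis .
qed

lemma main_d:
  fixes alpha eps0 :: real and R :: "nat \<Rightarrow> nat \<Rightarrow> (bool list \<times> nat) set set"
  assumes a0: "0 \<le> alpha" "alpha \<le> 1" and e0: "0 < eps0" "eps0 \<le> 1/2" and d1: "d \<ge> 1"
    and pat: "is_ordered_pattern k EF"
    and hyp: "\<forall>G. is_graph (cube d) G \<longrightarrow>
           (1 / real d) * (\<Sum>l=1..d. real (level_edges G l) / tau l d) \<ge> alpha + eps0 \<longrightarrow>
           contains_ordered_copy lexless (cube d) G k EF"
    and RF: "R_family R"
  shows "\<exists>M'. \<forall>m\<ge>M'. rho blockless (cube d \<times> {1..m}) (R m d) k EF \<le> alpha + 30 * eps0"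
proof -
  have Rg: "\<And>m. is_graph (cube d \<times> {1..m}) (R m d)" using RF unfolding R_family_def by blast
  obtain M where M: "\<forall>m\<ge>M.
        (\<forall>l\<in>{1..d}. approx_eq eps0 (real (block_level_edges (R m d) l)) (2 ^ (d - 1) * real m ^ 2)) \<and>
        approx_eq eps0 (real (card (R m d))) (real d * 2 ^ (d - 1) * real m ^ 2) \<and>
        (\<forall>x\<in>cube d. \<forall>y\<in>cube d. \<forall>P Q. x \<noteq> y \<longrightarrow> P \<subseteq> block m x \<longrightarrow> Q \<subseteq> block m y \<longrightarrow>
            real (card P) \<ge> real m powr (2/3) \<longrightarrow> real (card Q) \<ge> real m powr (2/3) \<longrightarrow>
            real (edges_between (R m d) P Q)
              \<le> (1 + eps0) * 2 powr (real (delta x y) - real d) * real (card P) * real (card Q))"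
    using RF e0 unfolding R_family_def by blast
  define \<theta> where "\<theta> = eps0 / (2 ^ d) ^ 3"
  define \<theta>' where "\<theta>' = \<theta> * 2 / 2 ^ d"
  define \<gamma> where "\<gamma> = min (eps0 / (2 ^ d) ^ 3) (\<theta>' ^ (k * k) / (real (k * k) + 1))"
  define \<eta> where "\<eta> = eps0 / ((2 ^ d) ^ 3 * (real (tb (2 ^ d) (nat \<lceil>1 / \<gamma> ^ 3\<rceil> + 1)) + 1))"
  define M' where "M' = max (max M 1) (nat \<lceil>(1 / \<eta>) ^ 3\<rceil>)"
  have th'pos: "\<theta>' > 0" unfolding \<theta>'_def \<theta>_def using e0 by simp
  have gpos: "\<gamma> > 0"
  proof -
    have "real (k * k) + 1 > 0" by (simp add: add_nonneg_pos)
    then have "\<theta>' ^ (k * k) / (real (k * k) + 1) > 0" using th'pos by (intro divide_pos_pos) auto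
    moreover have "eps0 / (2 ^ d) ^ 3 > 0" using e0 by simp
    ultimately show ?thesis unfolding \<gamma>_def by simp
  qed
  have gle: "\<gamma> \<le> eps0 / (2 ^ d) ^ 3" unfolding \<gamma>_def by simp
  have gk: "real (k * k) * \<gamma> < \<theta>' ^ (k * k)"
  proof -
    define K where "K = real (k * k)"
    have K0: "K \<ge> 0" unfolding K_def by simp
    have t0: "\<theta>' ^ (k * k) > 0" using th'pos by simp
    have "K * \<gamma> \<le> K * (\<theta>' ^ (k * k) / (K + 1))" unfolding \<gamma>_def K_def by (intro mult_left_mono) auto
    also have "\<dots> = \<theta>' ^ (k * k) * (K / (K + 1))" by (simp add: field_simps)
    also have "\<dots> < \<theta>' ^ (k * k) * 1" using t0 K0 by (intro mult_strict_left_mono) auto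
    finally show ?thesis unfolding K_def by simp
  qed
  have eta: "\<eta> > 0"
  proof -
    have "real (tb (2 ^ d) (nat \<lceil>1 / \<gamma> ^ 3\<rceil> + 1)) + 1 > 0" by (simp add: add_nonneg_pos)
    moreover have "((2::real) ^ d) ^ 3 > 0" by simp
    ultimately have "((2::real) ^ d) ^ 3 * (real (tb (2 ^ d) (nat \<lceil>1 / \<gamma> ^ 3\<rceil> + 1)) + 1) > 0" by (rule mult_pos_pos[rotated])
    then show ?thesis unfolding \<eta>_def using e0 by (intro divide_pos_pos)
  qed
  show ?thesis
  proof (intro exI[of _ M'] allI impI)
    fix m assume mM: "M' \<le> m"
    have m1: "m \<ge> 1" and mM0: "m \<ge> M" using mM unfolding M'_def by auto
    have "real m \<ge> (1 / \<eta>) ^ 3"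
    proof -
      have "(1 / \<eta>) ^ 3 \<le> real (nat \<lceil>(1 / \<eta>) ^ 3\<rceil>)" by (rule real_nat_ceiling_ge)
      also have "\<dots> \<le> real m" using mM unfolding M'_def by simp
      finally show ?thesis .
    qed
    then have etam: "\<eta> * m \<ge> real m powr (2/3)" by (rule etam_lemma[OF eta _ m1])
    have Mm: "(\<forall>l\<in>{1..d}. approx_eq eps0 (real (block_level_edges (R m d) l)) (2 ^ (d - 1) * real m ^ 2))"
      "approx_eq eps0 (real (card (R m d))) (real d * 2 ^ (d - 1) * real m ^ 2)"
      "(\<forall>x\<in>cube d. \<forall>y\<in>cube d. \<forall>P Q. x \<noteq> y \<longrightarrow> P \<subseteq> block m x \<longrightarrow> Q \<subseteq> block m y \<longrightarrow>
            real (card P) \<ge> real m powr (2/3) \<longrightarrow> real (card Q) \<ge> real m powr (2/3) \<longrightarrow>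
            real (edges_between (R m d) P Q)
              \<le> (1 + eps0) * 2 powr (real (delta x y) - real d) * real (card P) * real (card Q))"
      using M mM0 by auto
    define S where "S = {real (card E') / real (card (R m d)) | E'. E' \<subseteq> R m d \<and>
        \<not> contains_ordered_copy blockless (cube d \<times> {1..m}) E' k EF}"
    have finR: "finite (R m d)"
    proof -
      have "R m d \<subseteq> Pow (cube d \<times> {1..m})" using Rg[of m] unfolding is_graph_def by blast
      then show ?thesis using cube_finite by (meson finite_Pow_iff finite_SigmaI finite_atLeastAtMost finite_subset)
    qed
    have finS: "finite S"
    proof -
      have "S \<subseteq> (\<lambda>E'. real (card E') / real (card (R m d))) ` Pow (R m d)" unfolding S_def by blast
      then show ?thesis using finR by (meson finite_Pow_iff finite_imageI finite_subset)
    qed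
    have "Max (insert 0 S) \<le> alpha + 30 * eps0"
    proof (rule Max.boundedI)
      show "finite (insert 0 S)" using finS by simp
      show "insert 0 S \<noteq> {}" by simp
      fix z assume "z \<in> insert 0 S"
      then show "z \<le> alpha + 30 * eps0"
      proof
        assume "z = 0" then show ?thesis using a0 e0 by simp
      next
        assume "z \<in> S"
        then obtain E' where z: "z = real (card E') / real (card (R m d))" and E'R: "E' \<subseteq> R m d"
          and free: "\<not> contains_ordered_copy blockless (cube d \<times> {1..m}) E' k EF" unfolding S_def by blast
        show ?thesis unfolding z
          by (rule single_bound[OF a0 e0 d1 m1 pat hyp Rg Mm E'R free \<theta>_def \<theta>'_def gpos gle gk \<eta>_def etam])
      qed
    qed
    then show "rho blockless (cube d \<times> {1..m}) (R m d) k EF \<le> alpha + 30 * eps0"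
      unfolding rho_def S_def .
  qed
qed


theorem lemma3p6:
  fixes alpha :: real and k :: nat and EF :: "nat set set"
    and R :: "nat \<Rightarrow> nat \<Rightarrow> (bool list \<times> nat) set set"
  assumes "0 \<le> alpha" and "alpha \<le> 1"
    and "is_ordered_pattern k EF"
    and "\<forall>eps>0. \<exists>D. \<forall>d\<ge>D. \<forall>G. is_graph (cube d) G \<longrightarrow>
           (1 / real d) * (\<Sum>l=1..d. real (level_edges G l) / tau l d) \<ge> alpha + eps \<longrightarrow>
           contains_ordered_copy lexless (cube d) G k EF"
    and "R_family R"
  shows "limsup (\<lambda>d. limsup (\<lambda>m. ereal (rho blockless (cube d \<times> {1..m}) (R m d) k EF)))
           \<le> ereal alpha"
proof (rule ereal_le_epsilon2)
  fix e :: real assume e: "0 < e"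
  define eps0 where "eps0 = min (1/2) (e / 30)"
  have e0: "0 < eps0" "eps0 \<le> 1/2" unfolding eps0_def using e by auto
  have e30: "30 * eps0 \<le> e" unfolding eps0_def by linarith
  obtain D where D: "\<forall>d\<ge>D. \<forall>G. is_graph (cube d) G \<longrightarrow>
           (1 / real d) * (\<Sum>l=1..d. real (level_edges G l) / tau l d) \<ge> alpha + eps0 \<longrightarrow>
           contains_ordered_copy lexless (cube d) G k EF"
    using assms(4) e0 by blast
  have ev: "eventually (\<lambda>d. limsup (\<lambda>m. ereal (rho blockless (cube d \<times> {1..m}) (R m d) k EF)) \<le> ereal (alpha + e)) sequentially"
  proof (rule eventually_sequentiallyI[of "max D 1"])
    fix d assume "max D 1 \<le> d"
    then have d1: "d \<ge> 1" and dD: "d \<ge> D" by auto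
    have hypd: "\<forall>G. is_graph (cube d) G \<longrightarrow>
           (1 / real d) * (\<Sum>l=1..d. real (level_edges G l) / tau l d) \<ge> alpha + eps0 \<longrightarrow>
           contains_ordered_copy lexless (cube d) G k EF" using D dD by blast
    obtain M' where M': "\<forall>m\<ge>M'. rho blockless (cube d \<times> {1..m}) (R m d) k EF \<le> alpha + 30 * eps0"
      using main_d[OF assms(1,2) e0 d1 assms(3) hypd assms(5)] by blast
    have "eventually (\<lambda>m. ereal (rho blockless (cube d \<times> {1..m}) (R m d) k EF) \<le> ereal (alpha + e)) sequentially"
    proof (rule eventually_sequentiallyI[of M'])
      fix m assume "M' \<le> m"
      then have "rho blockless (cube d \<times> {1..m}) (R m d) k EF \<le> alpha + 30 * eps0" using M' by blast
      then show "ereal (rho blockless (cube d \<times> {1..m}) (R m d) k EF) \<le> ereal (alpha + e)" using e30 by simp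
    qed
    then show "limsup (\<lambda>m. ereal (rho blockless (cube d \<times> {1..m}) (R m d) k EF)) \<le> ereal (alpha + e)"
      by (rule Limsup_bounded)
  qed
  have "limsup (\<lambda>d. limsup (\<lambda>m. ereal (rho blockless (cube d \<times> {1..m}) (R m d) k EF))) \<le> ereal (alpha + e)"
    using ev by (rule Limsup_bounded)
  then show "limsup (\<lambda>d. limsup (\<lambda>m. ereal (rho blockless (cube d \<times> {1..m}) (R m d) k EF))) \<le> ereal alpha + ereal e"
    by simp
qed


end
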